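(* Let $\eta^0_1,\dots,\eta^0_{k_0}$ be distinct skew-normal parameters $\eta_i^0=(\theta_i^0,v_i^0,m_i^0)$ with $v_i^0>0$, satisfying $P_1(\eta^0)\neq0$ and $P_2(\eta^0)\ne0$. Then for every $r\ge1$ the functions $$\Big\{\frac{\partial^{|\kappa|}f}{\partial\theta^{\kappa_1}\partial v^{\kappa_2}\partial m^{\kappa_3}}(\cdot|\eta_i^0):\ \kappa\in\mathcal F_r,\ i=1,\dots,k_0\Big\}$$ are linearly independent.
   Context: Skew-normal kernel: $f(x|\theta,v,m)=\frac{2}{\sigma}\varphi\!\left(\frac{x-\theta}{\sigma}\right)\Phi\!\left(\frac{m(x-\theta)}{\sigma}\right)$, $\sigma=\sqrt v$. $P_1(\eta)=\prod_{j=1}^{k_0}m_j$, $P_2(\eta)=\prod_{1\le i\ne j\le k_0}\{(\theta_i-\theta_j)^2+[v_i(1+m_j^2)-v_j(1+m_i^2)]^2\}$. $\mathcal F_r=\{\kappa\in\mathbb{Z}_{\ge0}^3:\kappa_1\le1,\kappa_3=0,|\kappa|\le r\}\cup\{\kappa:\kappa_1\le1,\kappa_2=0,\kappa_3\ge1,|\kappa|\le r\}$ (so it contains $(0,0,0)$, giving $f$ itself). *)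

theory Defs
  imports "HOL-Probability.Probability"
begin

definition std_phi :: "real \<Rightarrow> real" where
  "std_phi z = exp (- z\<^sup>2 / 2) / sqrt (2 * pi)"

definition std_Phi :: "real \<Rightarrow> real" where
  "std_Phi z = (LBINT t:{..z}. std_phi t)"

definition skewn :: "real \<Rightarrow> real \<Rightarrow> real \<Rightarrow> real \<Rightarrow> real" where
  "skewn x \<theta> v m = 2 / sqrt v * std_phi ((x - \<theta>) / sqrt v) * std_Phi (m * (x - \<theta>) / sqrt v)"

definition d_theta :: "(real \<Rightarrow> real \<Rightarrow> real \<Rightarrow> real) \<Rightarrow> real \<Rightarrow> real \<Rightarrow> real \<Rightarrow> real" where
  "d_theta g = (\<lambda>\<theta> v m. deriv (\<lambda>t. g t v m) \<theta>)"

definition d_v :: "(real \<Rightarrow> real \<Rightarrow> real \<Rightarrow> real) \<Rightarrow> real \<Rightarrow> real \<Rightarrow> real \<Rightarrow> real" where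
  "d_v g = (\<lambda>\<theta> v m. deriv (\<lambda>t. g \<theta> t m) v)"

definition d_m :: "(real \<Rightarrow> real \<Rightarrow> real \<Rightarrow> real) \<Rightarrow> real \<Rightarrow> real \<Rightarrow> real \<Rightarrow> real" where
  "d_m g = (\<lambda>\<theta> v m. deriv (\<lambda>t. g \<theta> v t) m)"

definition skewn_deriv :: "nat \<times> nat \<times> nat \<Rightarrow> real \<Rightarrow> real \<Rightarrow> real \<Rightarrow> real \<Rightarrow> real" where
  "skewn_deriv \<kappa> x \<theta> v m =
     (case \<kappa> of (a, b, c) \<Rightarrow> (d_m ^^ c) ((d_v ^^ b) ((d_theta ^^ a) (skewn x))) \<theta> v m)"

definition F_set :: "nat \<Rightarrow> (nat \<times> nat \<times> nat) set" where
  "F_set r = {(a, b, c). a \<le> 1 \<and> c = 0 \<and> a + b + c \<le> r}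
           \<union> {(a, b, c). a \<le> 1 \<and> b = 0 \<and> c \<ge> 1 \<and> a + b + c \<le> r}"

definition P1 :: "nat \<Rightarrow> (nat \<Rightarrow> real) \<Rightarrow> real" where
  "P1 k0 m = (\<Prod>j<k0. m j)"

definition P2 :: "nat \<Rightarrow> (nat \<Rightarrow> real) \<Rightarrow> (nat \<Rightarrow> real) \<Rightarrow> (nat \<Rightarrow> real) \<Rightarrow> real" where
  "P2 k0 \<theta> v m = (\<Prod>(i, j) \<in> {(i, j). i < k0 \<and> j < k0 \<and> i \<noteq> j}.
      (\<theta> i - \<theta> j)\<^sup>2 + (v i * (1 + (m j)\<^sup>2) - v j * (1 + (m i)\<^sup>2))\<^sup>2)"

end

theory Submission
  imports Defs "HOL-Real_Asymp.Real_Asymp" "HOL-Computational_Algebra.Polynomial"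
begin

lemma std_phi_eq: "std_phi = std_normal_density"
  by (auto simp: std_phi_def std_normal_density_def fun_eq_iff)

lemma std_Phi_cdf: "std_Phi x = cdf std_normal_distribution x"
proof -
  interpret real_distribution std_normal_distribution by (rule real_dist_normal_dist)
  have "cdf std_normal_distribution x = measure std_normal_distribution {..x}"
    by (simp add: cdf_def)
  also have "\<dots> = integral\<^sup>L std_normal_distribution (indicator {..x})"
    by (simp add: integral_indicator emeasure_eq_measure)
  also have "\<dots> = integral\<^sup>L lborel (\<lambda>t. std_normal_density t *\<^sub>R indicator {..x} t)"
    by (rule integral_density) auto
  also have "\<dots> = std_Phi x"
    by (simp add: std_Phi_def set_lebesgue_integral_def std_phi_eq mult.commute)
  finally show ?thesis ..
qed

lemma std_Phi_top: "(std_Phi \<longlongrightarrow> 1) at_top"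
proof -
  interpret real_distribution std_normal_distribution by (rule real_dist_normal_dist)
  show ?thesis unfolding std_Phi_cdf[abs_def] using cdf_lim_at_top_prob by simp
qed

lemma std_Phi_bot: "(std_Phi \<longlongrightarrow> 0) at_bot"
proof -
  interpret real_distribution std_normal_distribution by (rule real_dist_normal_dist)
  show ?thesis unfolding std_Phi_cdf[abs_def] using cdf_lim_at_bot by simp
qed

lemma integrable_std_phi: "integrable lborel std_phi"
  using integrable_std_normal_moment[of 0] by (simp add: std_phi_eq)

lemma std_Phi_split: "std_Phi z = std_Phi 0 + (LBINT t=0..z. std_phi t)"
proof -
  have I: "interval_lebesgue_integrable lborel a b std_phi" for a b
    using integrable_std_phi unfolding interval_lebesgue_integrable_def set_integrable_def
    by (auto simp: mult.commute[of "indicator _ _"] intro!: integrable_real_mult_indicator)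
  have e: "std_Phi z = (LBINT t=-\<infinity>..ereal z. std_phi t)" for z
  proof -
    have "(LBINT t=-\<infinity>..ereal z. std_phi t) = (LBINT t:{..<z}. std_phi t)"
      by (simp add: interval_lebesgue_integral_def einterval_eq_Iic)
    also have "\<dots> = std_Phi z" unfolding std_Phi_def
    proof (rule set_integral_cong_set)
      show "AE t in lborel. (t \<in> {..z}) = (t \<in> {..<z})"
        using AE_lborel_singleton[of z] by eventually_elim auto
    qed (auto simp: set_borel_measurable_def std_phi_def)
    finally show ?thesis ..
  qed
  show ?thesis unfolding e zero_ereal_def
    by (rule interval_integral_sum[symmetric]) (rule I)
qed

lemma std_Phi_deriv: "(std_Phi has_real_derivative std_phi z) (at z)"
proof -
  define a where "a = min z 0 - 1"
  define b where "b = max z 0 + 1"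
  have cont: "continuous_on {a..b} std_phi"
    unfolding std_phi_def by (intro continuous_intros) auto
  have "((\<lambda>u. LBINT y=0..u. std_phi y) has_vector_derivative (std_phi z)) (at z within {a..b})"
    using interval_integral_FTC2[of a 0 b std_phi z] cont by (auto simp: a_def b_def zero_ereal_def)
  then have "((\<lambda>u. LBINT y=0..u. std_phi y) has_vector_derivative (std_phi z)) (at z)"
    by (subst (asm) at_within_Icc_at) (auto simp: a_def b_def)
  then have "((\<lambda>u. std_Phi 0 + (LBINT y=0..u. std_phi y)) has_real_derivative (std_phi z)) (at z)"
    by (auto simp: has_real_derivative_iff_has_vector_derivative intro!: derivative_eq_intros)
  then show ?thesis by (subst (asm) std_Phi_split[symmetric]) 
qed

lemma lim_poly_exp_top:
  assumes "a < 0 \<or> (a = 0 \<and> b < 0)"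
  shows "((\<lambda>x::real. poly q x * exp (a*x^2 + b*x)) \<longlongrightarrow> 0) at_top"
proof -
  have m: "((\<lambda>x::real. x^i * exp (a*x^2 + b*x)) \<longlongrightarrow> 0) at_top" for i
  proof (cases "a < 0")
    case True then show ?thesis by real_asymp
  next
    case False
    with assms have "a = 0" "b < 0" by auto
    then show ?thesis by simp real_asymp
  qed
  have "((\<lambda>x. \<Sum>i\<le>degree q. coeff q i * (x^i * exp (a*x^2 + b*x))) \<longlongrightarrow> 0) at_top"
    by (rule tendsto_null_sum) (intro tendsto_mult_right_zero m)
  then show ?thesis
    by (simp add: poly_altdef sum_distrib_right mult.assoc)
qed

lemma lim_poly_exp_bot:
  assumes "a < 0"
  shows "((\<lambda>x::real. poly q x * exp (a*x^2 + b*x)) \<longlongrightarrow> 0) at_bot"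
proof -
  have m: "((\<lambda>x::real. x^i * exp (a*x^2 + b*x)) \<longlongrightarrow> 0) at_bot" for i
    using assms by real_asymp
  have "((\<lambda>x. \<Sum>i\<le>degree q. coeff q i * (x^i * exp (a*x^2 + b*x))) \<longlongrightarrow> 0) at_bot"
    by (rule tendsto_null_sum) (intro tendsto_mult_right_zero m)
  then show ?thesis
    by (simp add: poly_altdef sum_distrib_right mult.assoc)
qed

lemma poly_tendsto_0:
  fixes p :: "real poly"
  assumes "(poly p \<longlongrightarrow> 0) at_top"
  shows "p = 0"
proof (rule ccontr)
  assume nz: "p \<noteq> 0"
  show False
  proof (cases "degree p = 0")
    case True
    then obtain k where p: "p = [:k:]" by (metis degree_eq_zeroE)
    with nz have "k \<noteq> 0" by auto
    moreover have "poly p = (\<lambda>_. k)" by (auto simp: p fun_eq_iff)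
    with assms have "((\<lambda>_::real. k) \<longlongrightarrow> 0) at_top" by simp
    ultimately show False by (simp add: tendsto_const_iff)
  next
    case False
    have "filterlim (poly p) at_infinity at_top"
      using filterlim_poly_at_infinity[of p] False filterlim_mono[OF _ _ at_top_le_at_infinity]
      by (metis filterlim_mono gr0I order_refl)
    then show False using assms not_tendsto_and_filterlim_at_infinity[of at_top "poly p" 0] by auto
  qed
qed

definition PS :: "(real \<times> real) set \<Rightarrow> (real \<times> real \<Rightarrow> real poly) \<Rightarrow> real \<Rightarrow> real" where
  "PS E c x = (\<Sum>e\<in>E. poly (c e) x * exp (fst e * x^2 + snd e * x))"

lemma PI:
  assumes "finite E" "\<And>x. PS E c x = 0"
  shows "\<forall>e\<in>E. c e = 0"
  using assms
proof (induction "card E" arbitrary: E)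
  case 0
  then show ?case by auto
next
  case (Suc n)
  then have ne: "E \<noteq> {}" by auto
  define A where "A = Max (fst ` E)"
  have A: "A \<in> fst ` E" "\<And>e. e \<in> E \<Longrightarrow> fst e \<le> A"
    using Suc.prems ne by (auto simp: A_def)
  define E1 where "E1 = {e\<in>E. fst e = A}"
  have E1: "finite E1" "E1 \<noteq> {}" using Suc.prems A by (auto simp: E1_def)
  define B where "B = Max (snd ` E1)"
  have B: "B \<in> snd ` E1" "\<And>e. e \<in> E1 \<Longrightarrow> snd e \<le> B"
    using E1 by (auto simp: B_def)
  define e0 where "e0 = (A, B)"
  have e0E: "e0 \<in> E" using B by (auto simp: e0_def E1_def)
  have dom: "fst e - A < 0 \<or> (fst e - A = 0 \<and> snd e - B < 0)" if "e \<in> E - {e0}" for e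
  proof -
    have "fst e \<le> A" using that A by auto
    moreover have "fst e = A \<Longrightarrow> snd e < B"
      using B(2)[of e] that by (cases e) (auto simp: E1_def e0_def)
    ultimately show ?thesis by force
  qed
  have eq: "poly (c e0) x = - (\<Sum>e\<in>E-{e0}. poly (c e) x * exp ((fst e - A)*x^2 + (snd e - B)*x))" for x
  proof -
    have "0 = PS E c x / exp (A*x^2 + B*x)" using Suc.prems by simp
    also have "\<dots> = (\<Sum>e\<in>E. poly (c e) x * exp ((fst e - A)*x^2 + (snd e - B)*x))"
      unfolding PS_def sum_divide_distrib
      by (intro sum.cong refl) (simp add: exp_diff algebra_simps)
    also have "\<dots> = poly (c e0) x + (\<Sum>e\<in>E-{e0}. poly (c e) x * exp ((fst e - A)*x^2 + (snd e - B)*x))"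
      using Suc.prems e0E by (subst sum.remove[of _ e0]) (auto simp: e0_def)
    finally show ?thesis by linarith
  qed
  have "((\<lambda>x. - (\<Sum>e\<in>E-{e0}. poly (c e) x * exp ((fst e - A)*x^2 + (snd e - B)*x))) \<longlongrightarrow> 0) at_top"
    by (rule tendsto_minus_cancel_left[THEN iffD1], simp, rule tendsto_null_sum) (use dom lim_poly_exp_top in auto)
  then have "(poly (c e0) \<longlongrightarrow> 0) at_top" by (simp add: eq[abs_def])
  then have c0: "c e0 = 0" by (rule poly_tendsto_0)
  have "PS (E - {e0}) c x = 0" for x
    using Suc.prems(2)[of x] Suc.prems e0E by (simp add: PS_def sum.remove[of E e0] c0)
  moreover have "n = card (E - {e0})" using Suc e0E by auto
  ultimately have "\<forall>e\<in>E-{e0}. c e = 0" using Suc by auto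
  with c0 show ?case by auto
qed

lemma std_Phi_chain [derivative_intros]:
  "(f has_real_derivative f') (at x within S) \<Longrightarrow>
   ((\<lambda>x. std_Phi (f x)) has_real_derivative std_phi (f x) * f') (at x within S)"
  by (rule DERIV_chain2[OF std_Phi_deriv])

lemma poly_chain [derivative_intros]:
  "(f has_real_derivative f') (at x within S) \<Longrightarrow>
   ((\<lambda>x. poly p (f x)) has_real_derivative poly (pderiv p) (f x) * f') (at x within S)"
  by (rule DERIV_chain2[OF poly_DERIV])

lemma poly_DERIV' [derivative_intros]:
  "((\<lambda>x. poly p x) has_real_derivative poly (pderiv p) x) (at x within S)"
  using poly_DERIV has_field_derivative_at_within by blast

definition dco :: "(real \<times> real \<Rightarrow> real poly) \<Rightarrow> real \<times> real \<Rightarrow> real poly" where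
  "dco c e = pderiv (c e) + [:snd e, 2 * fst e:] * c e"

lemma PS_deriv:
  assumes "finite E"
  shows "(PS E c has_real_derivative PS E (dco c) x) (at x)"
proof -
  have "((\<lambda>x. \<Sum>e\<in>E. poly (c e) x * exp (fst e * x^2 + snd e * x)) has_real_derivative
        (\<Sum>e\<in>E. poly (dco c e) x * exp (fst e * x^2 + snd e * x))) (at x)"
    by (rule DERIV_sum) (auto intro!: derivative_eq_intros simp: dco_def algebra_simps)
  then show ?thesis unfolding PS_def[abs_def] .
qed

lemma PS_mono:
  assumes "finite E'" "E \<subseteq> E'" "\<And>e. e \<in> E' - E \<Longrightarrow> c e = 0"
  shows "PS E c x = PS E' c x"
  unfolding PS_def using assms by (intro sum.mono_neutral_left) auto

lemma PS_add:
  assumes "finite E" "finite E'"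
  shows "PS E c x + PS E' c' x = PS (E \<union> E') (\<lambda>e. (if e \<in> E then c e else 0) + (if e \<in> E' then c' e else 0)) x"
proof -
  have "PS E c x = PS (E \<union> E') (\<lambda>e. if e \<in> E then c e else 0) x"
    using assms by (subst PS_mono[symmetric, of "E \<union> E'" E]) (auto simp: PS_def intro!: sum.cong)
  moreover have "PS E' c' x = PS (E \<union> E') (\<lambda>e. if e \<in> E' then c' e else 0) x"
    using assms by (subst PS_mono[symmetric, of "E \<union> E'" E']) (auto simp: PS_def intro!: sum.cong)
  ultimately show ?thesis by (simp add: PS_def sum.distrib[symmetric] distrib_right)
qed

lemma PS_img:
  assumes "finite T"
  shows "(\<Sum>t\<in>T. poly (q t) x * exp (fst (h t) * x^2 + snd (h t) * x)) =
         PS (h ` T) (\<lambda>e. \<Sum>t\<in>{t\<in>T. h t = e}. q t) x"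
  unfolding PS_def
  apply (subst sum.image_gen[OF assms, of _ h])
  apply (intro sum.cong refl)
  apply (simp add: poly_sum sum_distrib_right)
  done

lemma FG0:
  fixes T :: "'i set" and p g d :: "'i \<Rightarrow> real"
  assumes T: "finite T" and g: "\<And>t. t \<in> T \<Longrightarrow> g t \<noteq> 0"
    and inj: "inj_on (\<lambda>t. (- ((g t)^2 / 2), - (g t * d t))) T" and E: "finite E"
    and H: "\<And>x. (\<Sum>t\<in>T. p t * std_Phi (g t * x + d t)) + PS E c x = 0"
  shows "\<forall>t\<in>T. p t = 0"
proof
  fix t0 assume t0: "t0 \<in> T"
  define h where "h t = (- ((g t)^2 / 2), - (g t * d t))" for t
  define k where "k t = [:p t * g t * exp (- ((d t)^2/2)) / sqrt (2*pi):]" for t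
  have D: "((\<lambda>x. (\<Sum>t\<in>T. p t * std_Phi (g t * x + d t)) + PS E c x) has_real_derivative
          (\<Sum>t\<in>T. p t * (std_phi (g t * x + d t) * g t)) + PS E (dco c) x) (at x)" for x
    by (rule derivative_eq_intros PS_deriv[OF E] refl | simp)+ (simp add: mult_ac)
  have D0: "(\<Sum>t\<in>T. p t * (std_phi (g t * x + d t) * g t)) + PS E (dco c) x = 0" for x
  proof -
    have "((\<lambda>x. (\<Sum>t\<in>T. p t * std_Phi (g t * x + d t)) + PS E c x) has_real_derivative 0) (at x)"
      using H by simp
    then show ?thesis using D DERIV_unique by blast
  qed
  have phi: "p t * (std_phi (g t * x + d t) * g t) = poly (k t) x * exp (fst (h t) * x^2 + snd (h t) * x)" for t x
  proof -
    have "exp (- ((g t * x + d t)^2) / 2) = exp (- ((d t)^2/2)) * exp (fst (h t) * x^2 + snd (h t) * x)"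
      by (subst exp_add[symmetric]) (rule arg_cong[where f=exp], simp add: h_def power2_eq_square field_simps)
    then show ?thesis by (simp add: std_phi_def k_def)
  qed
  define cc where "cc e = (if e \<in> h ` T then (\<Sum>t\<in>{t\<in>T. h t = e}. k t) else 0) + (if e \<in> E then dco c e else 0)" for e
  have "PS (h ` T \<union> E) cc x = 0" for x
    using D0[of x] unfolding phi PS_img[OF T] cc_def
    by (subst (asm) PS_add) (use T E in auto)
  then have "\<forall>e \<in> h ` T \<union> E. cc e = 0" by (intro PI) (use T E in auto)
  then have cc0: "cc (h t0) = 0" using t0 by auto
  have grp: "{t\<in>T. h t = h t0} = {t0}" using inj t0 unfolding h_def inj_on_def by auto
  define q where "q = (if h t0 \<in> E then c (h t0) else 0)"
  define F where "F x = p t0 * std_Phi (g t0 * x + d t0) + poly q x * exp (fst (h t0) * x^2 + snd (h t0) * x)" for x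
  have "(F has_real_derivative 0) (at x)" for x
  proof -
    have "(F has_real_derivative p t0 * (std_phi (g t0 * x + d t0) * g t0) + poly (if h t0 \<in> E then dco c (h t0) else 0) x * exp (fst (h t0) * x^2 + snd (h t0) * x)) (at x)"
      unfolding F_def[abs_def] q_def
      by (cases "h t0 \<in> E"; (rule derivative_eq_intros refl poly_DERIV | simp)+) (auto simp: dco_def algebra_simps)
    also have "p t0 * (std_phi (g t0 * x + d t0) * g t0) + poly (if h t0 \<in> E then dco c (h t0) else 0) x * exp (fst (h t0) * x^2 + snd (h t0) * x)
       = poly (cc (h t0)) x * exp (fst (h t0) * x^2 + snd (h t0) * x)"
      unfolding phi cc_def grp using t0 by (auto simp: algebra_simps)
    finally show ?thesis using cc0 by simp
  qed
  then have Fc: "F x = F 0" for x using DERIV_isconst_all by blast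
  have a0: "fst (h t0) < 0" using g[OF t0] by (simp add: h_def)
  have R1: "((\<lambda>x. poly q x * exp (fst (h t0) * x^2 + snd (h t0) * x)) \<longlongrightarrow> 0) at_top"
    using lim_poly_exp_top a0 by blast
  have R2: "((\<lambda>x. poly q x * exp (fst (h t0) * x^2 + snd (h t0) * x)) \<longlongrightarrow> 0) at_bot"
    using lim_poly_exp_bot a0 by blast
  have lim: "\<exists>F1 F2. F1 \<noteq> bot \<and> F2 \<noteq> bot \<and> ((\<lambda>x. std_Phi (g t0 * x + d t0)) \<longlongrightarrow> 0) F1 \<and> ((\<lambda>x. std_Phi (g t0 * x + d t0)) \<longlongrightarrow> 1) F2
       \<and> ((\<lambda>x. poly q x * exp (fst (h t0) * x^2 + snd (h t0) * x)) \<longlongrightarrow> 0) F1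
       \<and> ((\<lambda>x. poly q x * exp (fst (h t0) * x^2 + snd (h t0) * x)) \<longlongrightarrow> 0) F2"
  proof (cases "g t0 > 0")
    case True
    have "filterlim (\<lambda>x. g t0 * x + d t0) at_bot at_bot" using True by real_asymp
    moreover have "filterlim (\<lambda>x. g t0 * x + d t0) at_top at_top" using True by real_asymp
    ultimately show ?thesis using R1 R2
      by (intro exI[of _ at_bot] exI[of _ at_top])
         (auto intro: filterlim_compose[OF std_Phi_bot] filterlim_compose[OF std_Phi_top])
  next
    case False
    then have "g t0 < 0" using g[OF t0] by linarith
    have "filterlim (\<lambda>x. g t0 * x + d t0) at_bot at_top" using \<open>g t0 < 0\<close> by real_asymp
    moreover have "filterlim (\<lambda>x. g t0 * x + d t0) at_top at_bot" using \<open>g t0 < 0\<close> by real_asymp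
    ultimately show ?thesis using R1 R2
      by (intro exI[of _ at_top] exI[of _ at_bot])
         (auto intro: filterlim_compose[OF std_Phi_bot] filterlim_compose[OF std_Phi_top])
  qed
  then obtain F1 F2 where L: "F1 \<noteq> bot" "F2 \<noteq> bot" "((\<lambda>x. std_Phi (g t0 * x + d t0)) \<longlongrightarrow> 0) F1" "((\<lambda>x. std_Phi (g t0 * x + d t0)) \<longlongrightarrow> 1) F2"
       "((\<lambda>x. poly q x * exp (fst (h t0) * x^2 + snd (h t0) * x)) \<longlongrightarrow> 0) F1"
       "((\<lambda>x. poly q x * exp (fst (h t0) * x^2 + snd (h t0) * x)) \<longlongrightarrow> 0) F2" by blast
  have "(F \<longlongrightarrow> p t0 * 0 + 0) F1" unfolding F_def[abs_def] by (intro tendsto_intros L)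
  then have "((\<lambda>_. F 0) \<longlongrightarrow> 0) F1" using tendsto_cong[of F "\<lambda>_. F 0" F1 0] Fc by simp
  then have f0: "F 0 = 0" using L(1) tendsto_const_iff by metis
  have "(F \<longlongrightarrow> p t0 * 1 + 0) F2" unfolding F_def[abs_def] by (intro tendsto_intros L)
  then have "((\<lambda>_. F 0) \<longlongrightarrow> p t0) F2" using tendsto_cong[of F "\<lambda>_. F 0" F2 "p t0"] Fc by simp
  then show "p t0 = 0" using L(2) tendsto_const_iff f0 by metis
qed

lemma FG_const:
  fixes T :: "'i set" and g d :: "'i \<Rightarrow> real"
  assumes T: "finite T" and g: "\<And>t. t \<in> T \<Longrightarrow> g t \<noteq> 0"
    and inj: "inj_on (\<lambda>t. (- ((g t)^2 / 2), - (g t * d t))) T" and E: "finite E"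
    and deg: "\<And>t. t \<in> T \<Longrightarrow> degree (P t) = 0"
    and H: "\<And>x. (\<Sum>t\<in>T. poly (P t) x * std_Phi (g t * x + d t)) + PS E c x = 0"
  shows "\<forall>t\<in>T. P t = 0"
proof -
  have pc: "poly (P t) x = coeff (P t) 0" if "t \<in> T" for t x
    by (simp add: poly_altdef deg[OF that])
  have "(\<Sum>t\<in>T. coeff (P t) 0 * std_Phi (g t * x + d t)) + PS E c x = 0" for x
    using H[of x] by (simp add: pc)
  then have "\<forall>t\<in>T. coeff (P t) 0 = 0" by (intro FG0[OF T g inj E]) auto
  then show ?thesis using deg by (metis degree_eq_zeroE coeff_pCons_0 pCons_0_0)
qed

lemma FG:
  fixes T :: "'i set" and g d :: "'i \<Rightarrow> real"
  assumes T: "finite T" and g: "\<And>t. t \<in> T \<Longrightarrow> g t \<noteq> 0"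
    and inj: "inj_on (\<lambda>t. (- ((g t)^2 / 2), - (g t * d t))) T"
  shows "(\<And>t. t \<in> T \<Longrightarrow> degree (P t) \<le> n) \<Longrightarrow> finite E \<Longrightarrow>
     (\<And>x. (\<Sum>t\<in>T. poly (P t) x * std_Phi (g t * x + d t)) + PS E c x = 0) \<Longrightarrow> \<forall>t\<in>T. P t = 0"
proof (induction n arbitrary: P E c)
  case 0
  then show ?case by (intro FG_const[OF T g inj]) auto
next
  case (Suc n)
  define h where "h t = (- ((g t)^2 / 2), - (g t * d t))" for t
  define k where "k t = smult (g t * exp (- ((d t)^2/2)) / sqrt (2*pi)) (P t)" for t
  have D: "((\<lambda>x. (\<Sum>t\<in>T. poly (P t) x * std_Phi (g t * x + d t)) + PS E c x) has_real_derivative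
          (\<Sum>t\<in>T. poly (pderiv (P t)) x * std_Phi (g t * x + d t) + poly (P t) x * (std_phi (g t * x + d t) * g t)) + PS E (dco c) x) (at x)" for x
    by (rule derivative_eq_intros PS_deriv[OF Suc.prems(2)] refl | simp)+ (simp add: mult_ac)
  have D0: "(\<Sum>t\<in>T. poly (pderiv (P t)) x * std_Phi (g t * x + d t) + poly (P t) x * (std_phi (g t * x + d t) * g t)) + PS E (dco c) x = 0" for x
  proof -
    have "((\<lambda>x. (\<Sum>t\<in>T. poly (P t) x * std_Phi (g t * x + d t)) + PS E c x) has_real_derivative 0) (at x)"
      using Suc.prems(3) by simp
    then show ?thesis using D DERIV_unique by blast
  qed
  have phi: "poly (P t) x * (std_phi (g t * x + d t) * g t) = poly (k t) x * exp (fst (h t) * x^2 + snd (h t) * x)" for t x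
  proof -
    have "exp (- ((g t * x + d t)^2) / 2) = exp (- ((d t)^2/2)) * exp (fst (h t) * x^2 + snd (h t) * x)"
      by (subst exp_add[symmetric]) (rule arg_cong[where f=exp], simp add: h_def power2_eq_square field_simps)
    then show ?thesis by (simp add: std_phi_def k_def)
  qed
  define cc where "cc e = (if e \<in> h ` T then (\<Sum>t\<in>{t\<in>T. h t = e}. k t) else 0) + (if e \<in> E then dco c e else 0)" for e
  have "(\<Sum>t\<in>T. poly (pderiv (P t)) x * std_Phi (g t * x + d t)) + PS (h ` T \<union> E) cc x = 0" for x
    using D0[of x] unfolding phi sum.distrib PS_img[OF T] cc_def
    by (subst (asm) add.assoc, subst (asm) PS_add) (use T Suc.prems(2) in auto)
  moreover have "finite (h ` T \<union> E)" using T Suc.prems(2) by auto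
  moreover have "degree (pderiv (P t)) \<le> n" if "t \<in> T" for t
    using Suc.prems(1)[OF that] by (simp add: degree_pderiv)
  ultimately have "\<forall>t\<in>T. pderiv (P t) = 0" using Suc.IH[of "\<lambda>t. pderiv (P t)" "h ` T \<union> E" cc] by blast
  then have "\<And>t. t \<in> T \<Longrightarrow> degree (P t) = 0" by (simp add: pderiv_eq_0_iff)
  then show ?case using FG_const[OF T g inj Suc.prems(2), of P c] Suc.prems(3) by blast
qed

lemma atom_deriv:
  "((\<lambda>x. poly p x * exp (a*x^2 + b*x) * std_Phi (g*x + d)) has_real_derivative
     poly (pderiv p + [:b, 2*a:] * p) x * exp (a*x^2 + b*x) * std_Phi (g*x + d)
     + poly (smult (g * exp (- (d^2/2)) / sqrt (2*pi)) p) x * exp ((a - g^2/2)*x^2 + (b - g*d)*x)) (at x)"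
proof -
  have e: "exp (a*x^2 + b*x) * std_phi (g*x + d) = exp (- (d^2/2)) / sqrt (2*pi) * exp ((a - g^2/2)*x^2 + (b - g*d)*x)"
  proof -
    have "exp (a*x^2 + b*x) * exp (- ((g*x + d)^2) / 2) = exp (- (d^2/2)) * exp ((a - g^2/2)*x^2 + (b - g*d)*x)"
      by (simp add: exp_add[symmetric] power2_eq_square field_simps)
    then show ?thesis by (simp add: std_phi_def)
  qed
  have "((\<lambda>x. poly p x * exp (a*x^2 + b*x) * std_Phi (g*x + d)) has_real_derivative
     (poly (pderiv p) x * exp (a*x^2 + b*x) + poly p x * (exp (a*x^2 + b*x) * (2*a*x + b))) * std_Phi (g*x + d)
     + poly p x * g * (exp (a*x^2 + b*x) * std_phi (g*x + d))) (at x)"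
    by (auto intro!: derivative_eq_intros simp: algebra_simps)
  also have "(poly (pderiv p) x * exp (a*x^2 + b*x) + poly p x * (exp (a*x^2 + b*x) * (2*a*x + b))) * std_Phi (g*x + d)
     + poly p x * g * (exp (a*x^2 + b*x) * std_phi (g*x + d)) =
     poly (pderiv p + [:b, 2*a:] * p) x * exp (a*x^2 + b*x) * std_Phi (g*x + d)
     + poly (smult (g * exp (- (d^2/2)) / sqrt (2*pi)) p) x * exp ((a - g^2/2)*x^2 + (b - g*d)*x)"
    unfolding e by (simp add: algebra_simps)
  finally show ?thesis .
qed

definition Fv :: "'i set \<Rightarrow> ('i \<Rightarrow> real poly) \<Rightarrow> ('i \<Rightarrow> real) \<Rightarrow> ('i \<Rightarrow> real) \<Rightarrow> ('i \<Rightarrow> real) \<Rightarrow> ('i \<Rightarrow> real)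
   \<Rightarrow> (real \<times> real) set \<Rightarrow> (real \<times> real \<Rightarrow> real poly) \<Rightarrow> real \<Rightarrow> real" where
  "Fv T P a b g d E c x = (\<Sum>t\<in>T. poly (P t) x * exp (a t * x^2 + b t * x) * std_Phi (g t * x + d t)) + PS E c x"

definition Lop :: "('i \<Rightarrow> real) \<Rightarrow> ('i \<Rightarrow> real) \<Rightarrow> real \<Rightarrow> real \<Rightarrow> 'i \<Rightarrow> real poly \<Rightarrow> real poly" where
  "Lop a b \<alpha> \<beta> t q = pderiv q + [:b t - \<beta>, 2 * (a t - \<alpha>):] * q"

lemma STEP:
  assumes T: "finite T" and E: "finite E" and H: "\<And>x. Fv T P a b g d E c x = 0"
  shows "\<exists>E' c'. finite E' \<and> (\<forall>x. Fv T (\<lambda>t. Lop a b \<alpha> \<beta> t (P t)) a b g d E' c' x = 0)"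
proof -
  define h where "h t = (a t - (g t)^2/2, b t - g t * d t)" for t
  define k where "k t = smult (g t * exp (- ((d t)^2/2)) / sqrt (2*pi)) (P t)" for t
  define c1 where "c1 e = dco c e - [:\<beta>, 2*\<alpha>:] * c e" for e
  have D: "(Fv T P a b g d E c has_real_derivative
      (\<Sum>t\<in>T. poly (pderiv (P t) + [:b t, 2*a t:] * P t) x * exp (a t*x^2 + b t*x) * std_Phi (g t*x + d t)
        + poly (k t) x * exp (fst (h t) * x^2 + snd (h t) * x)) + PS E (dco c) x) (at x)" for x
    unfolding Fv_def[abs_def] k_def h_def fst_conv snd_conv
    by (intro DERIV_add DERIV_sum atom_deriv PS_deriv[OF E])
  have D0: "(\<Sum>t\<in>T. poly (pderiv (P t) + [:b t, 2*a t:] * P t) x * exp (a t*x^2 + b t*x) * std_Phi (g t*x + d t)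
        + poly (k t) x * exp (fst (h t) * x^2 + snd (h t) * x)) + PS E (dco c) x = 0" for x
  proof -
    have "Fv T P a b g d E c = (\<lambda>_. 0)" using H by (simp add: fun_eq_iff)
    then have "(Fv T P a b g d E c has_real_derivative 0) (at x)" by simp
    then show ?thesis using D DERIV_unique by blast
  qed
  have "Fv T (\<lambda>t. Lop a b \<alpha> \<beta> t (P t)) a b g d E c1 x + PS (h ` T) (\<lambda>e. \<Sum>t\<in>{t\<in>T. h t = e}. k t) x
      = (\<Sum>t\<in>T. poly (pderiv (P t) + [:b t, 2*a t:] * P t) x * exp (a t*x^2 + b t*x) * std_Phi (g t*x + d t)
        + poly (k t) x * exp (fst (h t) * x^2 + snd (h t) * x)) + PS E (dco c) x - (2*\<alpha>*x + \<beta>) * Fv T P a b g d E c x" for x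
    unfolding Fv_def PS_img[OF T, symmetric] sum.distrib
    by (simp add: Lop_def c1_def PS_def algebra_simps sum_distrib_left sum_subtractf)
  then have "Fv T (\<lambda>t. Lop a b \<alpha> \<beta> t (P t)) a b g d E c1 x + PS (h ` T) (\<lambda>e. \<Sum>t\<in>{t\<in>T. h t = e}. k t) x = 0" for x
    using D0 H by simp
  then have "Fv T (\<lambda>t. Lop a b \<alpha> \<beta> t (P t)) a b g d (E \<union> h ` T)
      (\<lambda>e. (if e \<in> E then c1 e else 0) + (if e \<in> h ` T then (\<Sum>t\<in>{t\<in>T. h t = e}. k t) else 0)) x = 0" for x
    unfolding Fv_def using T E by (subst PS_add[symmetric]) (auto simp: add.assoc)
  then show ?thesis using T E by blast
qed

lemma ITER:
  assumes T: "finite T"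
  shows "finite E \<Longrightarrow> (\<And>x. Fv T P a b g d E c x = 0) \<Longrightarrow>
    \<exists>E' c'. finite E' \<and> (\<forall>x. Fv T (\<lambda>t. (Lop a b \<alpha> \<beta> t ^^ n) (P t)) a b g d E' c' x = 0)"
proof (induction n)
  case 0
  then show ?case by auto
next
  case (Suc n)
  then obtain E' c' where "finite E'" "\<And>x. Fv T (\<lambda>t. (Lop a b \<alpha> \<beta> t ^^ n) (P t)) a b g d E' c' x = 0" by blast
  from STEP[OF T this, of \<alpha> \<beta>] show ?case by simp
qed

lemma pderiv_iter_0: "degree q < n \<Longrightarrow> (pderiv ^^ n) (q :: real poly) = 0"
proof (induction n arbitrary: q)
  case 0 then show ?case by simp
next
  case (Suc n)
  show ?case
  proof (cases n)
    case 0
    with Suc.prems have "degree q = 0" by simp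
    then show ?thesis using 0 by (simp add: pderiv_eq_0_iff)
  next
    case (Suc m)
    have "degree (pderiv q) < n" using Suc.prems Suc by (simp add: degree_pderiv)
    then show ?thesis by (simp add: funpow_Suc_right Suc.IH del: funpow.simps)
  qed
qed

lemma Lop_same: "(a t, b t) = (\<alpha>, \<beta>) \<Longrightarrow> Lop a b \<alpha> \<beta> t = pderiv"
  by (auto simp: Lop_def fun_eq_iff)

lemma Lop_zero: "Lop a b \<alpha> \<beta> t 0 = 0" by (simp add: Lop_def)

lemma Lop_iter_zero: "(Lop a b \<alpha> \<beta> t ^^ n) 0 = 0"
  by (induction n) (auto simp: Lop_zero)

lemma Lop_nz:
  assumes "(a t, b t) \<noteq> (\<alpha>, \<beta>)" "q \<noteq> 0"
  shows "Lop a b \<alpha> \<beta> t q \<noteq> 0"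
proof -
  define l where "l = [:b t - \<beta>, 2 * (a t - \<alpha>):]"
  have l: "l \<noteq> 0" using assms(1) by (auto simp: l_def)
  have lq: "l * q \<noteq> 0" using l assms(2) by simp
  have dq: "degree q \<le> degree (l * q)" using l assms(2) by (simp add: degree_mult_eq)
  show ?thesis
  proof (cases "degree q = 0")
    case True
    then have "pderiv q = 0" by (simp add: pderiv_eq_0_iff)
    then show ?thesis using lq by (simp add: Lop_def l_def)
  next
    case False
    then have "degree (pderiv q) < degree (l * q)" using dq by (simp add: degree_pderiv)
    then have "degree (pderiv q + l * q) = degree (l * q)" by (rule degree_add_eq_right)
    then show ?thesis using False dq by (auto simp: Lop_def l_def)
  qed
qed

lemma Lop_iter_nz:
  assumes "(a t, b t) \<noteq> (\<alpha>, \<beta>)" "q \<noteq> 0"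
  shows "(Lop a b \<alpha> \<beta> t ^^ n) q \<noteq> 0"
proof (induction n)
  case 0 then show ?case using assms by simp
next
  case (Suc n) then show ?case using Lop_nz[of a t b \<alpha> \<beta>] assms(1) by simp
qed

lemma ELIM:
  assumes T: "finite T" and t0: "t0 \<in> T"
  shows "card {t\<in>T. (a t, b t) \<noteq> (a t0, b t0) \<and> P t \<noteq> 0} = n \<Longrightarrow> finite E \<Longrightarrow>
    (\<And>x. Fv T P a b g d E c x = 0) \<Longrightarrow> P t0 \<noteq> 0 \<Longrightarrow>
    (\<exists>P' E' c'. finite E' \<and> (\<forall>x. Fv T P' a b g d E' c' x = 0) \<and> P' t0 \<noteq> 0 \<and>
       (\<forall>t\<in>T. (a t, b t) \<noteq> (a t0, b t0) \<longrightarrow> P' t = 0))"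
proof (induction n arbitrary: P E c rule: less_induct)
  case (less n)
  define S where "S = {t\<in>T. (a t, b t) \<noteq> (a t0, b t0) \<and> P t \<noteq> 0}"
  show ?case
  proof (cases "S = {}")
    case True
    then show ?thesis using less.prems unfolding S_def by blast
  next
    case False
    then obtain t1 where t1: "t1 \<in> S" by blast
    define \<alpha> where "\<alpha> = a t1"
    define \<beta> where "\<beta> = b t1"
    define N where "N = Suc (degree (P t1))"
    obtain E' c' where E': "finite E'" "\<And>x. Fv T (\<lambda>t. (Lop a b \<alpha> \<beta> t ^^ N) (P t)) a b g d E' c' x = 0"
      using ITER[OF T less.prems(2,3), where \<alpha>=\<alpha> and \<beta>=\<beta> and n=N] by blast
    define P' where "P' t = (Lop a b \<alpha> \<beta> t ^^ N) (P t)" for t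
    have P't1: "P' t1 = 0"
      unfolding P'_def using Lop_same[of a t1 b \<alpha> \<beta>] pderiv_iter_0[of "P t1" N]
      by (simp add: \<alpha>_def \<beta>_def N_def)
    have diff0: "(a t0, b t0) \<noteq> (\<alpha>, \<beta>)" using t1 by (auto simp: S_def \<alpha>_def \<beta>_def)
    have P't0: "P' t0 \<noteq> 0" unfolding P'_def using Lop_iter_nz[where a=a and b=b and t=t0, OF diff0 less.prems(4)] .
    have sub: "{t\<in>T. (a t, b t) \<noteq> (a t0, b t0) \<and> P' t \<noteq> 0} \<subseteq> S - {t1}"
      using P't1 by (auto simp: S_def P'_def Lop_iter_zero)
    have "card {t\<in>T. (a t, b t) \<noteq> (a t0, b t0) \<and> P' t \<noteq> 0} < n"
    proof -
      have "card {t\<in>T. (a t, b t) \<noteq> (a t0, b t0) \<and> P' t \<noteq> 0} \<le> card (S - {t1})"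
        using sub T by (intro card_mono) (auto simp: S_def)
      also have "\<dots> < card S" using t1 T by (intro card_Diff1_less) (auto simp: S_def)
      finally show ?thesis using less.prems(1) by (simp add: S_def)
    qed
    from less.IH[OF this refl E'(1)] E'(2) P't0 show ?thesis unfolding P'_def by blast
  qed
qed

lemma GL:
  fixes T :: "'i set"
  assumes T: "finite T" and g: "\<And>t. t \<in> T \<Longrightarrow> g t \<noteq> 0"
    and sep: "\<And>t t'. t \<in> T \<Longrightarrow> t' \<in> T \<Longrightarrow> (a t, b t) = (a t', b t') \<Longrightarrow>
                  ((g t)^2, g t * d t) = ((g t')^2, g t' * d t') \<Longrightarrow> t = t'"
    and E: "finite E" and H: "\<And>x. Fv T P a b g d E c x = 0"
  shows "\<forall>t\<in>T. P t = 0"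
proof (rule ccontr)
  assume "\<not> (\<forall>t\<in>T. P t = 0)"
  then obtain t0 where t0: "t0 \<in> T" "P t0 \<noteq> 0" by blast
  obtain P' E' c' where el: "finite E'" "\<And>x. Fv T P' a b g d E' c' x = 0" "P' t0 \<noteq> 0"
      "\<And>t. t \<in> T \<Longrightarrow> (a t, b t) \<noteq> (a t0, b t0) \<Longrightarrow> P' t = 0"
    using ELIM[OF T t0(1) refl E H t0(2)] by blast
  define S where "S = {t\<in>T. (a t, b t) = (a t0, b t0)}"
  have S: "finite S" "t0 \<in> S" "S \<subseteq> T" using T t0 by (auto simp: S_def)
  define \<alpha> where "\<alpha> = a t0"
  define \<beta> where "\<beta> = b t0"
  define sh where "sh e = (fst e - \<alpha>, snd e - \<beta>)" for e :: "real \<times> real"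
  have "(\<Sum>t\<in>S. poly (P' t) x * std_Phi (g t * x + d t)) + PS (sh ` E') (\<lambda>e. \<Sum>e'\<in>{e'\<in>E'. sh e' = e}. c' e') x = 0" for x
  proof -
    have "(\<Sum>t\<in>T. poly (P' t) x * exp (a t * x^2 + b t * x) * std_Phi (g t * x + d t)) =
          (\<Sum>t\<in>S. poly (P' t) x * exp (a t * x^2 + b t * x) * std_Phi (g t * x + d t))"
      using S T el(4) by (intro sum.mono_neutral_right) (auto simp: S_def)
    also have "\<dots> = exp (\<alpha> * x^2 + \<beta> * x) * (\<Sum>t\<in>S. poly (P' t) x * std_Phi (g t * x + d t))"
      by (simp add: sum_distrib_left S_def \<alpha>_def \<beta>_def algebra_simps)
    finally have 1: "(\<Sum>t\<in>T. poly (P' t) x * exp (a t * x^2 + b t * x) * std_Phi (g t * x + d t)) =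
       exp (\<alpha> * x^2 + \<beta> * x) * (\<Sum>t\<in>S. poly (P' t) x * std_Phi (g t * x + d t))" .
    have "PS E' c' x = exp (\<alpha> * x^2 + \<beta> * x) * (\<Sum>e\<in>E'. poly (c' e) x * exp (fst (sh e) * x^2 + snd (sh e) * x))"
      unfolding PS_def sum_distrib_left
      by (intro sum.cong refl) (simp add: sh_def exp_add[symmetric] algebra_simps)
    also have "\<dots> = exp (\<alpha> * x^2 + \<beta> * x) * PS (sh ` E') (\<lambda>e. \<Sum>e'\<in>{e'\<in>E'. sh e' = e}. c' e') x"
      by (simp add: PS_img[OF el(1)])
    finally have 2: "PS E' c' x = \<dots>" .
    have "0 = Fv T P' a b g d E' c' x" using el(2) by simp
    also have "\<dots> = exp (\<alpha> * x^2 + \<beta> * x) * ((\<Sum>t\<in>S. poly (P' t) x * std_Phi (g t * x + d t)) + PS (sh ` E') (\<lambda>e. \<Sum>e'\<in>{e'\<in>E'. sh e' = e}. c' e') x)"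
      unfolding Fv_def 1 2 by (simp add: algebra_simps)
    finally show ?thesis by simp
  qed
  moreover have "inj_on (\<lambda>t. (- ((g t)^2 / 2), - (g t * d t))) S"
    using sep S(3) by (auto simp: inj_on_def S_def)
  moreover have "\<And>t. t \<in> S \<Longrightarrow> degree (P' t) \<le> (\<Sum>t\<in>S. degree (P' t))"
    using S(1) by (intro member_le_sum) auto
  moreover have "finite (sh ` E')" using el(1) by auto
  ultimately have "\<forall>t\<in>S. P' t = 0"
    using FG[OF S(1), of g d] g S(3) by blast
  with S el(3) show False by auto
qed

definition val :: "real poly poly \<Rightarrow> real \<Rightarrow> real \<Rightarrow> real" where
  "val A sg y = poly (poly A [:y:]) sg"

lemma val_add[simp]: "val (A + B) sg y = val A sg y + val B sg y" by (simp add: val_def)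
lemma val_diff[simp]: "val (A - B) sg y = val A sg y - val B sg y" by (simp add: val_def)
lemma val_0[simp]: "val 0 sg y = 0" by (simp add: val_def)
lemma val_smult[simp]: "val (smult q A) sg y = poly q sg * val A sg y" by (simp add: val_def)
lemma val_monom[simp]: "val (A * monom q k) sg y = val A sg y * poly q sg * y^k"
  by (simp add: val_def poly_monom)
lemma val_const[simp]: "val [:q:] sg y = poly q sg" by (simp add: val_def)
lemma val_pCons[simp]: "val (pCons q A) sg y = poly q sg + y * val A sg y" by (simp add: val_def)

lemma pderiv_poly_const: "pderiv (poly A [:y:]) = poly (map_poly pderiv A) [:y:]"
  by (induction A) (simp_all add: map_poly_pCons pderiv_add pderiv_mult pderiv_pCons pderiv_smult)

lemma val_deriv[derivative_intros]:
  "(f has_real_derivative f') (at x within S) \<Longrightarrow>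
   ((\<lambda>x. val A (f x) y) has_real_derivative val (map_poly pderiv A) (f x) y * f') (at x within S)"
  unfolding val_def pderiv_poly_const[symmetric] by (rule poly_chain)

definition Ys :: "real poly poly \<Rightarrow> real \<Rightarrow> real poly" where
  "Ys A sg = map_poly (\<lambda>q. poly q sg) A"

lemma poly_Ys: "poly (Ys A sg) y = val A sg y"
  unfolding Ys_def val_def by (induction A) (simp_all add: map_poly_pCons)

lemma degree_Ys: "poly (lead_coeff A) sg \<noteq> 0 \<Longrightarrow> degree (Ys A sg) = degree A"
  unfolding Ys_def by (rule map_poly_degree_eq)

lemma E12: "exp (- (sg^2*y^2)/2) * std_phi (m* sg*y) = exp (- ((1+m^2)* sg^2*y^2)/2) / sqrt (2*pi)"
  by (simp add: std_phi_def exp_add[symmetric] power_mult_distrib field_simps)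

section \<open>Family V (derivatives in v)\<close>

definition Vf :: "real \<Rightarrow> real \<Rightarrow> real poly poly \<Rightarrow> real poly poly \<Rightarrow> real \<Rightarrow> real" where
  "Vf y m A B sg = val A sg y * exp (- (sg^2*y^2)/2) * std_Phi (m* sg*y) + val B sg y * exp (- ((1+m^2)* sg^2*y^2)/2)"

definition stVA :: "real poly poly \<Rightarrow> real poly poly" where
  "stVA A = smult [:0,0,0,-1/2:] (map_poly pderiv A) + A * monom [:0,0,0,0,1/2:] 2"

definition stVB :: "real \<Rightarrow> real poly poly \<Rightarrow> real poly poly \<Rightarrow> real poly poly" where
  "stVB m A B = smult [:0,0,0,-1/2:] (map_poly pderiv B) + B * monom [:0,0,0,0,(1+m^2)/2:] 2
      - A * monom [:0,0,0,m/(2* sqrt(2*pi)):] 1"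

lemma Vf_deriv:
  assumes w: "w > 0"
  shows "((\<lambda>w. Vf y m A B (1/sqrt w)) has_real_derivative Vf y m (stVA A) (stVB m A B) (1/sqrt w)) (at w)"
proof -
  define sg where "sg = 1/sqrt w"
  have s0: "sg > 0" using w by (simp add: sg_def)
  have ds: "((\<lambda>w. 1/sqrt w) has_real_derivative -(1/2) * sg^3) (at w)"
  proof -
    have "((\<lambda>w. 1/sqrt w) has_real_derivative - (inverse (sqrt w) / 2 / w)) (at w)"
      using w by (auto intro!: derivative_eq_intros simp: divide_simps power2_eq_square)
    moreover have "- (inverse (sqrt w) / 2 / w) = -(1/2) * sg^3"
      using w by (simp add: sg_def power3_eq_cube divide_simps)
    ultimately show ?thesis by (metis (no_types, lifting) divide_divide_eq_left mult.commute mult_minus_left times_divide_eq_right mult_1)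
  qed
  define E1 where "E1 = exp (- (sg^2*y^2)/2)"
  define E2 where "E2 = exp (- ((1+m^2)* sg^2*y^2)/2)"
  have Dsg: "(Vf y m A B has_real_derivative
     (val (map_poly pderiv A) sg y * E1 * std_Phi (m * sg * y)
      + val A sg y * (E1 * (- (2 * sg * y^2)/2)) * std_Phi (m * sg * y)
      + val A sg y * E1 * (std_phi (m * sg * y) * (m * y))
      + val (map_poly pderiv B) sg y * E2 + val B sg y * (E2 * (- ((1+m^2)*(2 * sg)*y^2)/2)))) (at sg)"
    unfolding Vf_def[abs_def] E1_def E2_def
    by (rule derivative_eq_intros refl | simp)+ (simp add: algebra_simps power2_eq_square)
  have "((\<lambda>w. Vf y m A B (1/sqrt w)) has_real_derivative
     (val (map_poly pderiv A) sg y * E1 * std_Phi (m * sg * y)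
      + val A sg y * (E1 * (- (2 * sg * y^2)/2)) * std_Phi (m * sg * y)
      + val A sg y * E1 * (std_phi (m * sg * y) * (m * y))
      + val (map_poly pderiv B) sg y * E2 + val B sg y * (E2 * (- ((1+m^2)*(2 * sg)*y^2)/2))) * (-(1/2) * sg^3)) (at w)"
    using DERIV_chain2[OF Dsg[unfolded sg_def] ds] unfolding sg_def .
  also have "(val (map_poly pderiv A) sg y * E1 * std_Phi (m* sg*y)
      + val A sg y * (E1 * (- (2* sg*y^2)/2)) * std_Phi (m* sg*y)
      + val A sg y * E1 * (std_phi (m* sg*y) * (m*y))
      + val (map_poly pderiv B) sg y * E2 + val B sg y * (E2 * (- ((1+m^2)*(2* sg)*y^2)/2))) * (-(1/2) * sg^3)
     = Vf y m (stVA A) (stVB m A B) sg"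
  proof -
    have e: "E1 * std_phi (m* sg*y) = E2 / sqrt (2*pi)" unfolding E1_def E2_def by (rule E12)
    have "val A sg y * E1 * (std_phi (m* sg*y) * (m*y)) = val A sg y * (m*y) * (E2 / sqrt (2*pi))"
      unfolding e[symmetric] by (simp add: algebra_simps)
    then show ?thesis
      unfolding Vf_def stVA_def stVB_def E1_def[symmetric] E2_def[symmetric]
      by (simp add: algebra_simps power2_eq_square power3_eq_cube power4_eq_xxxx)
  qed
  finally show ?thesis by (simp add: sg_def)
qed

definition stV :: "real \<Rightarrow> real poly poly \<times> real poly poly \<Rightarrow> real poly poly \<times> real poly poly" where
  "stV m AB = (stVA (fst AB), stVB m (fst AB) (snd AB))"

lemma stV_pair: "stV m (A, B) = (stVA A, stVB m A B)" by (simp add: stV_def)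

lemma deriv_iter_local:
  assumes "open S" "\<And>w. w \<in> S \<Longrightarrow> f w = g w" "w \<in> S"
  shows "(deriv ^^ n) f w = (deriv ^^ n) g w"
  using assms(3)
proof (induction n arbitrary: w)
  case 0 then show ?case using assms(2) by simp
next
  case (Suc n)
  have "eventually (\<lambda>x. x \<in> S) (nhds w)" using assms(1) Suc.prems by (rule eventually_nhds_in_open)
  then have "eventually (\<lambda>x. (deriv ^^ n) f x = (deriv ^^ n) g x) (nhds w)"
    by eventually_elim (rule Suc.IH)
  then show ?case by (simp add: deriv_cong_ev)
qed

lemma deriv_iter_V:
  "w > 0 \<Longrightarrow> (deriv ^^ n) (\<lambda>w. Vf y m A B (1/sqrt w)) w =
     Vf y m (fst ((stV m ^^ n) (A, B))) (snd ((stV m ^^ n) (A, B))) (1/sqrt w)"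
proof (induction n arbitrary: A B w)
  case 0 then show ?case by simp
next
  case (Suc n)
  have "deriv (\<lambda>w. Vf y m A B (1/sqrt w)) w' = Vf y m (stVA A) (stVB m A B) (1/sqrt w')" if "w' \<in> {0<..}" for w'
    using Vf_deriv[of w' y m A B] that by (intro DERIV_imp_deriv) auto
  then have "(deriv ^^ n) (deriv (\<lambda>w. Vf y m A B (1/sqrt w))) w = (deriv ^^ n) (\<lambda>w. Vf y m (stVA A) (stVB m A B) (1/sqrt w)) w"
    using Suc.prems by (intro deriv_iter_local[of "{0<..}"]) auto
  also have "\<dots> = Vf y m (fst ((stV m ^^ n) (stVA A, stVB m A B))) (snd ((stV m ^^ n) (stVA A, stVB m A B))) (1/sqrt w)"
    using Suc by blast
  finally show ?case by (simp add: funpow_Suc_right stV_pair del: funpow.simps)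
qed

section \<open>Family M (derivatives in m)\<close>

definition Mf :: "real \<Rightarrow> real \<Rightarrow> real poly \<Rightarrow> real poly poly \<Rightarrow> real \<Rightarrow> real" where
  "Mf y sg A B u = poly A y * exp (- (sg^2*y^2)/2) * std_Phi (u * sg * y) + val B u y * exp (- ((1+u^2)* sg^2*y^2)/2)"

definition stMB :: "real \<Rightarrow> real poly \<Rightarrow> real poly poly \<Rightarrow> real poly poly" where
  "stMB sg A B = map_poly pderiv B - B * monom [:0, sg^2:] 2 + map_poly (\<lambda>r. [:r:]) (A * [:0, sg / sqrt (2*pi):])"

lemma val_liftc[simp]: "val (map_poly (\<lambda>r. [:r:]) C) u y = poly C y"
  unfolding val_def by (induction C) (simp_all add: map_poly_pCons)

lemma Mf_deriv:
  "(Mf y sg A B has_real_derivative Mf y sg 0 (stMB sg A B) u) (at u)"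
proof -
  define E1 where "E1 = exp (- (sg^2*y^2)/2)"
  define E2 where "E2 = exp (- ((1+u^2)* sg^2*y^2)/2)"
  have "(Mf y sg A B has_real_derivative
     poly A y * E1 * (std_phi (u * sg * y) * (sg * y))
      + val (map_poly pderiv B) u y * E2 + val B u y * (E2 * (- ((2*u)* sg^2*y^2)/2))) (at u)"
    unfolding Mf_def[abs_def] E1_def E2_def
    by (rule derivative_eq_intros refl | simp)+
  also have "poly A y * E1 * (std_phi (u * sg * y) * (sg * y))
      + val (map_poly pderiv B) u y * E2 + val B u y * (E2 * (- ((2*u)* sg^2*y^2)/2)) = Mf y sg 0 (stMB sg A B) u"
  proof -
    have e: "E1 * std_phi (u * sg * y) = E2 / sqrt (2*pi)" unfolding E1_def E2_def using E12[of sg y u] by (simp add: mult.assoc)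
    have "poly A y * E1 * (std_phi (u * sg * y) * (sg * y)) = poly A y * (sg * y) * (E2 / sqrt (2*pi))"
      unfolding e[symmetric] by (simp add: algebra_simps)
    then show ?thesis
      unfolding Mf_def stMB_def E2_def[symmetric]
      by (simp add: algebra_simps power2_eq_square)
  qed
  finally show ?thesis .
qed

definition stM :: "real \<Rightarrow> real poly \<times> real poly poly \<Rightarrow> real poly \<times> real poly poly" where
  "stM sg AB = (0, stMB sg (fst AB) (snd AB))"

lemma deriv_iter_M:
  "(deriv ^^ n) (Mf y sg A B) u = Mf y sg (fst ((stM sg ^^ n) (A, B))) (snd ((stM sg ^^ n) (A, B))) u"
proof (induction n arbitrary: A B u)
  case 0 then show ?case by simp
next
  case (Suc n)
  have "deriv (Mf y sg A B) = Mf y sg 0 (stMB sg A B)"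
    using Mf_deriv[of y sg A B] by (intro ext DERIV_imp_deriv) auto
  then show ?case using Suc[of 0 "stMB sg A B"] by (simp add: funpow_Suc_right stM_def del: funpow.simps)
qed

lemma dv_iter: "(d_v ^^ n) G \<theta> v m = (deriv ^^ n) (\<lambda>w. G \<theta> w m) v"
  by (induction n arbitrary: v) (simp_all add: d_v_def)

lemma dm_iter_fun: "(d_m ^^ n) G \<theta> v = (deriv ^^ n) (\<lambda>u. G \<theta> v u)"
  by (induction n) (simp_all add: d_m_def)

lemma dm_iter: "(d_m ^^ n) G \<theta> v m = (deriv ^^ n) (\<lambda>u. G \<theta> v u) m"
  by (simp add: dm_iter_fun)

definition KK :: real where "KK = 2 / sqrt (2*pi)"

lemma skewn_Vf: "skewn x \<theta> w m = Vf (x-\<theta>) m [:[:0,KK:]:] 0 (1/sqrt w)"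
  by (simp add: skewn_def Vf_def std_phi_def KK_def power_divide field_simps)

lemma skewn_Mf: "skewn x \<theta> v u = Mf (x-\<theta>) (1/sqrt v) [:KK/sqrt v:] 0 u"
  by (simp add: skewn_def Mf_def std_phi_def KK_def power_divide field_simps)

lemma dtheta_closed:
  assumes w: "w > 0"
  defines "sg \<equiv> 1/sqrt w"
  shows "d_theta (skewn x) \<theta> w u =
    KK * sg^3 * (x-\<theta>) * exp (- (sg^2*(x-\<theta>)^2)/2) * std_Phi (u * sg * (x-\<theta>))
    - KK * u * sg^2 / sqrt (2*pi) * exp (- ((1+u^2)* sg^2*(x-\<theta>)^2)/2)"
proof -
  have sk: "skewn x t w u = KK * sg * exp (- (sg^2*(x-t)^2)/2) * std_Phi (u * sg * (x-t))" for t
    by (simp add: skewn_def std_phi_def KK_def sg_def power_divide field_simps)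
  define y where "y = x - \<theta>"
  have "((\<lambda>t. skewn x t w u) has_real_derivative
      KK * sg * (exp (- (sg^2*(x-\<theta>)^2)/2) * (sg^2 * (x-\<theta>))) * std_Phi (u * sg * (x-\<theta>))
      + KK * sg * exp (- (sg^2*(x-\<theta>)^2)/2) * (std_phi (u * sg * (x-\<theta>)) * (- (u * sg)))) (at \<theta>)"
    unfolding sk by (rule derivative_eq_intros refl | simp)+ (simp add: field_simps power2_eq_square)
  then have "d_theta (skewn x) \<theta> w u =
      KK * sg * (exp (- (sg^2*(x-\<theta>)^2)/2) * (sg^2 * (x-\<theta>))) * std_Phi (u * sg * (x-\<theta>))
      + KK * sg * exp (- (sg^2*(x-\<theta>)^2)/2) * (std_phi (u * sg * (x-\<theta>)) * (- (u * sg)))"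
    unfolding d_theta_def by (rule DERIV_imp_deriv)
  also have "\<dots> = KK * sg^3 * (x-\<theta>) * exp (- (sg^2*(x-\<theta>)^2)/2) * std_Phi (u * sg * (x-\<theta>))
    - KK * u * sg^2 / sqrt (2*pi) * exp (- ((1+u^2)* sg^2*(x-\<theta>)^2)/2)"
  proof -
    define E1 where "E1 = exp (- (sg^2*(x-\<theta>)^2)/2)"
    define E2 where "E2 = exp (- ((1+u^2)* sg^2*(x-\<theta>)^2)/2)"
    define P where "P = std_phi (u * sg * (x-\<theta>))"
    have e: "E1 * P = E2 / sqrt (2*pi)"
      unfolding E1_def E2_def P_def using E12[of sg "x-\<theta>" u] by (simp add: mult.assoc)
    have "KK * sg * E1 * (P * (- (u * sg))) = - (KK * u * sg^2) * (E1 * P)"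
      by (simp add: algebra_simps power2_eq_square)
    then show ?thesis
      unfolding E1_def[symmetric] E2_def[symmetric] P_def[symmetric] e
      by (simp add: algebra_simps power3_eq_cube power2_eq_square)
  qed
  finally show ?thesis .
qed

definition IV :: "nat \<Rightarrow> real \<Rightarrow> real poly poly \<times> real poly poly" where
  "IV a m = (if a = 0 then ([:[:0,KK:]:], 0) else ([:0, [:0,0,0,KK:]:], [:[:0,0,-KK*m/sqrt (2*pi):]:]))"

definition IM :: "nat \<Rightarrow> real \<Rightarrow> real poly \<times> real poly poly" where
  "IM a sg = (if a = 0 then ([:KK* sg:], 0) else ([:0, KK* sg^3:], [:[:0, -KK* sg^2/sqrt (2*pi):]:]))"

lemma D_V:
  assumes "w > 0" "a \<le> 1"
  shows "(d_theta ^^ a) (skewn x) \<theta> w m = Vf (x-\<theta>) m (fst (IV a m)) (snd (IV a m)) (1/sqrt w)"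
proof (cases "a = 0")
  case True then show ?thesis by (simp add: IV_def skewn_Vf)
next
  case False
  then have a: "a = 1" using assms by simp
  show ?thesis using assms(1) unfolding a
    by (simp add: IV_def dtheta_closed Vf_def algebra_simps power2_eq_square power3_eq_cube)
qed

lemma D_M:
  assumes "v > 0" "a \<le> 1"
  shows "(d_theta ^^ a) (skewn x) \<theta> v u = Mf (x-\<theta>) (1/sqrt v) (fst (IM a (1/sqrt v))) (snd (IM a (1/sqrt v))) u"
proof (cases "a = 0")
  case True then show ?thesis by (simp add: IM_def skewn_Mf)
next
  case False
  then have a: "a = 1" using assms by simp
  show ?thesis using assms(1) unfolding a
    by (simp add: IM_def dtheta_closed Mf_def algebra_simps power2_eq_square power3_eq_cube)
qed

lemma REP_V:
  assumes "v > 0" "a \<le> 1"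
  shows "skewn_deriv (a, b, 0) x \<theta> v m =
    Vf (x-\<theta>) m (fst ((stV m ^^ b) (IV a m))) (snd ((stV m ^^ b) (IV a m))) (1/sqrt v)"
proof -
  have "skewn_deriv (a, b, 0) x \<theta> v m = (deriv ^^ b) (\<lambda>w. (d_theta ^^ a) (skewn x) \<theta> w m) v"
    by (simp add: skewn_deriv_def dv_iter)
  also have "\<dots> = (deriv ^^ b) (\<lambda>w. Vf (x-\<theta>) m (fst (IV a m)) (snd (IV a m)) (1/sqrt w)) v"
    using assms by (intro deriv_iter_local[of "{0<..}"]) (auto simp: D_V)
  also have "\<dots> = Vf (x-\<theta>) m (fst ((stV m ^^ b) (IV a m))) (snd ((stV m ^^ b) (IV a m))) (1/sqrt v)"
    using deriv_iter_V[OF assms(1)] by simp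
  finally show ?thesis .
qed

lemma REP_M:
  assumes "v > 0" "a \<le> 1"
  shows "skewn_deriv (a, 0, c) x \<theta> v m =
    Mf (x-\<theta>) (1/sqrt v) (fst ((stM (1/sqrt v) ^^ c) (IM a (1/sqrt v)))) (snd ((stM (1/sqrt v) ^^ c) (IM a (1/sqrt v)))) m"
proof -
  have "skewn_deriv (a, 0, c) x \<theta> v m = (deriv ^^ c) (\<lambda>u. (d_theta ^^ a) (skewn x) \<theta> v u) m"
    by (simp add: skewn_deriv_def dm_iter)
  also have "(\<lambda>u. (d_theta ^^ a) (skewn x) \<theta> v u) = Mf (x-\<theta>) (1/sqrt v) (fst (IM a (1/sqrt v))) (snd (IM a (1/sqrt v)))"
    using assms by (auto simp: D_M)
  also have "(deriv ^^ c) \<dots> m = Mf (x-\<theta>) (1/sqrt v) (fst ((stM (1/sqrt v) ^^ c) (IM a (1/sqrt v)))) (snd ((stM (1/sqrt v) ^^ c) (IM a (1/sqrt v)))) m"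
    using deriv_iter_M by simp
  finally show ?thesis .
qed

lemma stVA_deg:
  assumes A: "A \<noteq> 0" and l: "poly (lead_coeff A) sg \<noteq> 0" and s: "sg \<noteq> 0"
  shows "stVA A \<noteq> 0 \<and> degree (stVA A) = degree A + 2 \<and> poly (lead_coeff (stVA A)) sg \<noteq> 0"
proof -
  define q :: "real poly" where "q = [:0,0,0,0,1/2:]"
  have q: "q \<noteq> 0" by (simp add: q_def)
  have m: "monom q 2 \<noteq> 0" using q by simp
  have d2: "degree (A * monom q 2) = degree A + 2" using A m q by (simp add: degree_mult_eq degree_monom_eq)
  have d1: "degree (smult [:0,0,0,-1/2:] (map_poly pderiv A)) < degree (A * monom q 2)"
    using degree_smult_le[of "[:0,0,0,-1/2:]" "map_poly pderiv A"] map_poly_degree_leq[of pderiv A] d2 by linarith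
  have deg: "degree (stVA A) = degree A + 2"
    unfolding stVA_def q_def[symmetric] using degree_add_eq_right[OF d1] d2 by simp
  have lc: "lead_coeff (stVA A) = lead_coeff A * q"
  proof -
    have "lead_coeff (stVA A) = lead_coeff (A * monom q 2)"
      unfolding stVA_def q_def[symmetric] by (rule lead_coeff_add_le[OF d1])
    also have "\<dots> = lead_coeff A * q" by (simp only: lead_coeff_mult lead_coeff_monom)
    finally show ?thesis .
  qed
  have "poly (lead_coeff (stVA A)) sg \<noteq> 0" using l s by (simp add: lc q_def)
  then show ?thesis using deg by auto
qed

lemma DV:
  assumes s: "sg > 0" and a: "a \<le> 1"
  shows "fst ((stV m ^^ b) (IV a m)) \<noteq> 0 \<and> degree (fst ((stV m ^^ b) (IV a m))) = a + 2*b
     \<and> poly (lead_coeff (fst ((stV m ^^ b) (IV a m)))) sg \<noteq> 0"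
proof (induction b)
  case 0
  show ?case
  proof (cases "a = 0")
    case True then show ?thesis using s by (simp add: IV_def KK_def)
  next
    case False then have "a = 1" using a by simp
    then show ?thesis using s by (simp add: IV_def KK_def)
  qed
next
  case (Suc b)
  have e: "fst ((stV m ^^ Suc b) (IV a m)) = stVA (fst ((stV m ^^ b) (IV a m)))"
    by (simp add: stV_def)
  define A where "A = fst ((stV m ^^ b) (IV a m))"
  have h: "A \<noteq> 0" "degree A = a + 2*b" "poly (lead_coeff A) sg \<noteq> 0" using Suc by (auto simp: A_def)
  have H: "stVA A \<noteq> 0 \<and> degree (stVA A) = degree A + 2 \<and> poly (lead_coeff (stVA A)) sg \<noteq> 0"
    using s by (intro stVA_deg[OF h(1) h(3)]) simp
  show ?case unfolding e A_def[symmetric]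
  proof (intro conjI)
    show "degree (stVA A) = a + 2 * Suc b" using conjunct1[OF conjunct2[OF H]] h(2) by simp
  qed (use H in blast)+
qed

lemma stMB0_deg:
  assumes B: "B \<noteq> 0" and l: "poly (lead_coeff B) m \<noteq> 0" and s: "sg \<noteq> 0" and m: "m \<noteq> 0"
  shows "stMB sg 0 B \<noteq> 0 \<and> degree (stMB sg 0 B) = degree B + 2 \<and> poly (lead_coeff (stMB sg 0 B)) m \<noteq> 0"
proof -
  define q :: "real poly" where "q = [:0, sg^2:]"
  have q: "q \<noteq> 0" using s by (simp add: q_def)
  have mo: "monom q 2 \<noteq> 0" using q by simp
  have d2: "degree (- (B * monom q 2)) = degree B + 2" using B mo q by (simp add: degree_mult_eq degree_monom_eq)
  have d1: "degree (map_poly pderiv B) < degree (- (B * monom q 2))"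
    using map_poly_degree_leq[of pderiv B] d2 by linarith
  have eq: "stMB sg 0 B = map_poly pderiv B + - (B * monom q 2)" by (simp add: stMB_def q_def)
  have deg: "degree (stMB sg 0 B) = degree B + 2"
    unfolding eq using degree_add_eq_right[OF d1] d2 by simp
  have lc: "lead_coeff (stMB sg 0 B) = - (lead_coeff B * q)"
  proof -
    have "lead_coeff (stMB sg 0 B) = lead_coeff (- (B * monom q 2))"
      unfolding eq by (rule lead_coeff_add_le[OF d1])
    also have "\<dots> = - (lead_coeff B * q)" by (simp only: lead_coeff_minus lead_coeff_mult lead_coeff_monom)
    finally show ?thesis .
  qed
  have "poly (lead_coeff (stMB sg 0 B)) m \<noteq> 0" using l s m by (simp add: lc q_def)
  then show ?thesis using deg by auto
qed

lemma stM1: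
  assumes s: "sg > 0" and m: "m \<noteq> 0" and a: "a \<le> 1"
  shows "stMB sg (fst (IM a sg)) (snd (IM a sg)) \<noteq> 0 \<and> degree (stMB sg (fst (IM a sg)) (snd (IM a sg))) = a + 1
     \<and> poly (lead_coeff (stMB sg (fst (IM a sg)) (snd (IM a sg)))) m \<noteq> 0"
proof (cases "a = 0")
  case True
  have e: "stMB sg (fst (IM a sg)) (snd (IM a sg)) = [:0, [:KK * sg * (sg / sqrt (2*pi)):]:]"
    using True by (simp add: IM_def stMB_def map_poly_pCons)
  show ?thesis unfolding e using True s by (simp add: KK_def)
next
  case False
  then have a1: "a = 1" using a by simp
  define e where "e = - KK * sg^2 / sqrt (2*pi)"
  define f where "f = KK * sg^3 * (sg / sqrt (2*pi))"
  have eq: "stMB sg (fst (IM a sg)) (snd (IM a sg)) = [:[:e:], 0, [:f, 0, - e * sg^2:]:]"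
    using a1 by (simp add: IM_def stMB_def map_poly_pCons e_def f_def monom_Suc monom_0 numeral_2_eq_2 pderiv_pCons algebra_simps)
  have f0: "f > 0" using s by (simp add: f_def KK_def)
  have "poly [:f, 0, - e * sg^2:] m = f * (1 + m^2)"
    by (simp add: e_def f_def KK_def field_simps power2_eq_square power3_eq_cube)
  moreover have "f * (1 + m^2) \<noteq> 0" using f0 zero_le_power2[of m] by (metis add_pos_nonneg mult_pos_pos less_irrefl zero_less_one)
  ultimately show ?thesis unfolding eq using a1 f0 by auto
qed

lemma DM:
  assumes s: "sg > 0" and m: "m \<noteq> 0" and a: "a \<le> 1" and c: "c \<ge> 1"
  shows "fst ((stM sg ^^ c) (IM a sg)) = 0 \<and> snd ((stM sg ^^ c) (IM a sg)) \<noteq> 0 \<and>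
     degree (snd ((stM sg ^^ c) (IM a sg))) = a + 2*c - 1
     \<and> poly (lead_coeff (snd ((stM sg ^^ c) (IM a sg)))) m \<noteq> 0"
  using c
proof (induction c rule: dec_induct)
  case base
  define X where "X = stMB sg (fst (IM a sg)) (snd (IM a sg))"
  have st: "(stM sg ^^ 1) (IM a sg) = (0, X)" by (simp add: stM_def X_def)
  have H: "X \<noteq> 0 \<and> degree X = a + 1 \<and> poly (lead_coeff X) m \<noteq> 0" using stM1[OF s m a] unfolding X_def .
  show ?case unfolding st fst_conv snd_conv
  proof (intro conjI)
    show "degree X = a + 2 * 1 - 1" using H by linarith
  qed (use H in blast)+
next
  case (step c)
  have f0: "fst ((stM sg ^^ c) (IM a sg)) = 0" using step.IH by blast
  have e: "(stM sg ^^ Suc c) (IM a sg) = (0, stMB sg 0 (snd ((stM sg ^^ c) (IM a sg))))"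
  proof -
    have "(stM sg ^^ Suc c) (IM a sg) = stM sg ((stM sg ^^ c) (IM a sg))" by simp
    also have "\<dots> = (0, stMB sg (fst ((stM sg ^^ c) (IM a sg))) (snd ((stM sg ^^ c) (IM a sg))))" by (simp only: stM_def)
    finally show ?thesis unfolding f0 .
  qed
  define B where "B = snd ((stM sg ^^ c) (IM a sg))"
  have h: "B \<noteq> 0" "degree B = a + 2*c - 1" "poly (lead_coeff B) m \<noteq> 0" using step by (auto simp: B_def)
  have H: "stMB sg 0 B \<noteq> 0 \<and> degree (stMB sg 0 B) = degree B + 2 \<and> poly (lead_coeff (stMB sg 0 B)) m \<noteq> 0"
    using s m by (intro stMB0_deg[OF h(1) h(3)]) simp_all
  show ?case unfolding e B_def[symmetric] fst_conv snd_conv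
  proof (intro conjI)
    show "degree (stMB sg 0 B) = a + 2 * Suc c - 1" using conjunct1[OF conjunct2[OF H]] h(2) step.hyps by simp
  qed (use H in auto)
qed

lemma DEGIND:
  fixes q :: "'k \<Rightarrow> real poly"
  assumes "finite K" "\<And>k. k \<in> K \<Longrightarrow> q k \<noteq> 0" "inj_on (\<lambda>k. degree (q k)) K"
    "(\<Sum>k\<in>K. smult (w k) (q k)) = 0"
  shows "\<forall>k\<in>K. w k = 0"
  using assms
proof (induction "card K" arbitrary: K)
  case 0 then show ?case by auto
next
  case (Suc n)
  then have ne: "K \<noteq> {}" by auto
  define D where "D = Max ((\<lambda>k. degree (q k)) ` K)"
  have "D \<in> (\<lambda>k. degree (q k)) ` K" unfolding D_def using Suc.prems(1) ne by (intro Max_in) auto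
  then obtain k0 where k0: "k0 \<in> K" "degree (q k0) = D" by auto
  have le: "degree (q k) \<le> D" if "k \<in> K" for k using Suc.prems(1) that by (auto simp: D_def)
  have lt: "degree (q k) < D" if "k \<in> K" "k \<noteq> k0" for k
    using le[OF that(1)] Suc.prems(3) that k0 unfolding inj_on_def by force
  have "0 = coeff (\<Sum>k\<in>K. smult (w k) (q k)) D" using Suc.prems(4) by simp
  also have "\<dots> = (\<Sum>k\<in>K. w k * coeff (q k) D)" by (simp add: coeff_sum)
  also have "\<dots> = w k0 * coeff (q k0) D + (\<Sum>k\<in>K-{k0}. w k * coeff (q k) D)"
    using Suc.prems(1) k0 by (simp add: sum.remove)
  also have "(\<Sum>k\<in>K-{k0}. w k * coeff (q k) D) = 0"
    by (intro sum.neutral) (use lt coeff_eq_0 in auto)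
  finally have "w k0 * lead_coeff (q k0) = 0" using k0 by simp
  then have w0: "w k0 = 0" using Suc.prems(2)[OF k0(1)] by simp
  have "(\<Sum>k\<in>K-{k0}. smult (w k) (q k)) = 0"
    using Suc.prems(4) Suc.prems(1) k0 by (simp add: sum.remove w0)
  moreover have "n = card (K - {k0})" using Suc.hyps(2) k0 Suc.prems(1) by auto
  ultimately have "\<forall>k\<in>K-{k0}. w k = 0"
    by (intro Suc.hyps(1)) (use Suc.prems(1,2,3) inj_on_diff in auto)
  with w0 show ?case by auto
qed

lemma Ys_nz:
  assumes "poly (lead_coeff A) s \<noteq> 0"
  shows "Ys A s \<noteq> 0 \<and> degree (Ys A s) = degree A"
proof -
  have "coeff (Ys A s) (degree A) = poly (lead_coeff A) s" by (simp add: Ys_def coeff_map_poly)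
  then show ?thesis using assms degree_Ys[OF assms] by auto
qed

definition YA :: "real \<Rightarrow> real \<Rightarrow> nat \<times> nat \<times> nat \<Rightarrow> real poly" where
  "YA v m \<kappa> = (case \<kappa> of (a, b, c) \<Rightarrow> if c = 0 then Ys (fst ((stV m ^^ b) (IV a m))) (1/sqrt v)
      else fst ((stM (1/sqrt v) ^^ c) (IM a (1/sqrt v))))"

definition YB :: "real \<Rightarrow> real \<Rightarrow> nat \<times> nat \<times> nat \<Rightarrow> real poly" where
  "YB v m \<kappa> = (case \<kappa> of (a, b, c) \<Rightarrow> if c = 0 then Ys (snd ((stV m ^^ b) (IV a m))) (1/sqrt v)
      else Ys (snd ((stM (1/sqrt v) ^^ c) (IM a (1/sqrt v)))) m)"

lemma F_set_cases:
  assumes "\<kappa> \<in> F_set r"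
  obtains a b where "\<kappa> = (a, b, 0)" "a \<le> 1" "a + b \<le> r"
  | a c where "\<kappa> = (a, 0, c)" "a \<le> 1" "c \<ge> 1" "a + c \<le> r"
  using assms unfolding F_set_def by auto

lemma REP:
  assumes v: "v > 0" and k: "\<kappa> \<in> F_set r"
  shows "skewn_deriv \<kappa> x \<theta> v m =
    poly (YA v m \<kappa>) (x-\<theta>) * exp (- ((1/sqrt v)^2*(x-\<theta>)^2)/2) * std_Phi (m * (1/sqrt v) * (x-\<theta>))
    + poly (YB v m \<kappa>) (x-\<theta>) * exp (- ((1+m^2)*(1/sqrt v)^2*(x-\<theta>)^2)/2)"
  using k
proof (cases rule: F_set_cases)
  case (1 a b)
  show ?thesis unfolding 1(1) REP_V[OF v 1(2)]
    by (simp add: Vf_def YA_def YB_def poly_Ys)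
next
  case (2 a c)
  show ?thesis unfolding 2(1) REP_M[OF v 2(2)] using 2
    by (simp add: Mf_def YA_def YB_def poly_Ys)
qed

lemma REPx:
  assumes v: "v > 0" and k: "\<kappa> \<in> F_set r"
  defines "sg \<equiv> 1/sqrt v"
  shows "skewn_deriv \<kappa> x \<theta> v m =
    poly (smult (exp (- (sg^2*\<theta>^2)/2)) (pcompose (YA v m \<kappa>) [:-\<theta>, 1:])) x
      * exp ((- (sg^2/2)) * x^2 + (sg^2*\<theta>) * x) * std_Phi ((m * sg) * x + (- (m * sg * \<theta>)))
    + poly (smult (exp (- ((1+m^2)* sg^2*\<theta>^2)/2)) (pcompose (YB v m \<kappa>) [:-\<theta>, 1:])) x
      * exp ((- ((1+m^2)* sg^2/2)) * x^2 + ((1+m^2)* sg^2*\<theta>) * x)"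
proof -
  have e1: "exp (- (sg^2*(x-\<theta>)^2)/2) = exp (- (sg^2*\<theta>^2)/2) * exp ((- (sg^2/2)) * x^2 + (sg^2*\<theta>) * x)"
    by (simp add: exp_add[symmetric] power2_eq_square field_simps)
  have e2: "exp (- ((1+m^2)* sg^2*(x-\<theta>)^2)/2) = exp (- ((1+m^2)* sg^2*\<theta>^2)/2) * exp ((- ((1+m^2)* sg^2/2)) * x^2 + ((1+m^2)* sg^2*\<theta>) * x)"
    by (simp add: exp_add[symmetric] power2_eq_square field_simps)
  have p: "m * sg * (x - \<theta>) = (m * sg) * x + (- (m * sg * \<theta>))" by (simp add: algebra_simps)
  show ?thesis unfolding REP[OF v k] sg_def[symmetric] e1 e2 p
    by (simp add: poly_pcompose algebra_simps)
qed

lemma P2_factor: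
  assumes "P2 k0 \<theta> v m \<noteq> 0" "i < k0" "j < k0" "i \<noteq> j"
  shows "(\<theta> i - \<theta> j)^2 + (v i * (1 + (m j)^2) - v j * (1 + (m i)^2))^2 \<noteq> 0"
proof
  assume z: "(\<theta> i - \<theta> j)^2 + (v i * (1 + (m j)^2) - v j * (1 + (m i)^2))^2 = 0"
  have fin: "finite {(i, j). i < k0 \<and> j < k0 \<and> i \<noteq> j}"
    by (rule finite_subset[of _ "{..<k0} \<times> {..<k0}"]) auto
  have "P2 k0 \<theta> v m = 0" unfolding P2_def
    using z assms(2-4) by (subst prod_zero_iff[OF fin]) auto
  with assms(1) show False by simp
qed

lemma P2_sep:
  assumes "P2 k0 \<theta> v m \<noteq> 0" "i < k0" "j < k0" "\<theta> i = \<theta> j" "v i * (1 + (m j)^2) = v j * (1 + (m i)^2)"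
  shows "i = j"
  using P2_factor[OF assms(1-3)] assms(4,5) by fastforce

lemma sg2: "v > 0 \<Longrightarrow> (1/sqrt v)^2 = 1/v"
  by (simp add: power_divide)

lemma par1: "(a::nat) \<le> 1 \<Longrightarrow> a' \<le> 1 \<Longrightarrow> a + 2*b = a' + 2*b' \<Longrightarrow> a = a' \<and> b = b'"
proof -
  assume h: "a \<le> 1" "a' \<le> 1" "a + 2*b = a' + 2*b'"
  have "a = a'"
  proof (rule ccontr)
    assume "a \<noteq> a'"
    then have "odd (a + 2*b) \<noteq> odd (a' + 2*b')" using h(1,2) by (auto simp: le_Suc_eq)
    then show False using h(3) by simp
  qed
  then show ?thesis using h(3) by simp
qed
lemma par2: "(a::nat) \<le> 1 \<Longrightarrow> a' \<le> 1 \<Longrightarrow> c \<ge> 1 \<Longrightarrow> c' \<ge> 1 \<Longrightarrow> a + 2*c - 1 = a' + 2*c' - 1 \<Longrightarrow> a = a' \<and> c = c'"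
proof -
  assume h: "a \<le> 1" "a' \<le> 1" "c \<ge> 1" "c' \<ge> 1" "a + 2*c - 1 = a' + 2*c' - 1"
  then have "a + 2*c = a' + 2*c'" by linarith
  then show ?thesis using par1 h(1,2) by blast
qed

theorem lemma4p3:
  fixes k0 r :: nat and \<theta>0 v0 m0 :: "nat \<Rightarrow> real"
  assumes distinct: "inj_on (\<lambda>i. (\<theta>0 i, v0 i, m0 i)) {..<k0}"
    and vpos: "\<And>i. i < k0 \<Longrightarrow> v0 i > 0"
    and P1nz: "P1 k0 m0 \<noteq> 0"
    and P2nz: "P2 k0 \<theta>0 v0 m0 \<noteq> 0"
    and r: "r \<ge> 1"
  shows "\<forall>c :: nat \<Rightarrow> nat \<times> nat \<times> nat \<Rightarrow> real.
           (\<forall>x. (\<Sum>i<k0. \<Sum>\<kappa>\<in>F_set r. c i \<kappa> * skewn_deriv \<kappa> x (\<theta>0 i) (v0 i) (m0 i)) = 0)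
           \<longrightarrow> (\<forall>i<k0. \<forall>\<kappa>\<in>F_set r. c i \<kappa> = 0)"
proof (rule allI, rule impI)
  fix c :: "nat \<Rightarrow> nat \<times> nat \<times> nat \<Rightarrow> real"
  assume H: "\<forall>x. (\<Sum>i<k0. \<Sum>\<kappa>\<in>F_set r. c i \<kappa> * skewn_deriv \<kappa> x (\<theta>0 i) (v0 i) (m0 i)) = 0"
  have mnz: "m0 i \<noteq> 0" if "i < k0" for i
    using P1nz that unfolding P1_def by (auto simp: prod_zero_iff)
  define sg where "sg i = 1 / sqrt (v0 i)" for i
  have sgpos: "sg i > 0" if "i < k0" for i using vpos[OF that] by (simp add: sg_def)
  have sgsq: "(sg i)^2 = 1 / v0 i" if "i < k0" for i using vpos[OF that] by (simp add: sg_def sg2)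
  define aA where "aA i = - ((sg i)^2/2)" for i
  define bA where "bA i = (sg i)^2 * \<theta>0 i" for i
  define g where "g i = m0 i * sg i" for i
  define d where "d i = - (m0 i * sg i * \<theta>0 i)" for i
  define hB where "hB i = (- ((1 + (m0 i)^2) * (sg i)^2/2), (1 + (m0 i)^2) * (sg i)^2 * \<theta>0 i)" for i
  define EA where "EA i = exp (- ((sg i)^2 * (\<theta>0 i)^2)/2)" for i
  define EB where "EB i = exp (- ((1 + (m0 i)^2) * (sg i)^2 * (\<theta>0 i)^2)/2)" for i
  define L where "L i = [:- \<theta>0 i, 1:]" for i
  define PP where "PP i = (\<Sum>\<kappa>\<in>F_set r. smult (c i \<kappa> * EA i) (pcompose (YA (v0 i) (m0 i) \<kappa>) (L i)))" for i
  define QQ where "QQ i = (\<Sum>\<kappa>\<in>F_set r. smult (c i \<kappa> * EB i) (pcompose (YB (v0 i) (m0 i) \<kappa>) (L i)))" for i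
  define K where "K = {..<k0}"
  define cc where "cc e = (\<Sum>i\<in>{i\<in>K. hB i = e}. QQ i)" for e
  have Kfin: "finite K" by (simp add: K_def)
  have row: "(\<Sum>\<kappa>\<in>F_set r. c i \<kappa> * skewn_deriv \<kappa> x (\<theta>0 i) (v0 i) (m0 i)) =
      poly (PP i) x * exp (aA i * x^2 + bA i * x) * std_Phi (g i * x + d i)
      + poly (QQ i) x * exp (fst (hB i) * x^2 + snd (hB i) * x)" if "i < k0" for i x
  proof -
    have "(\<Sum>\<kappa>\<in>F_set r. c i \<kappa> * skewn_deriv \<kappa> x (\<theta>0 i) (v0 i) (m0 i)) =
       (\<Sum>\<kappa>\<in>F_set r. c i \<kappa> * (poly (smult (EA i) (pcompose (YA (v0 i) (m0 i) \<kappa>) (L i))) x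
          * exp (aA i * x^2 + bA i * x) * std_Phi (g i * x + d i)
        + poly (smult (EB i) (pcompose (YB (v0 i) (m0 i) \<kappa>) (L i))) x
          * exp (fst (hB i) * x^2 + snd (hB i) * x)))"
      by (intro sum.cong refl, subst REPx[OF vpos[OF that]], assumption)
         (simp add: sg_def EA_def EB_def L_def aA_def bA_def g_def d_def hB_def)
    also have "\<dots> = poly (PP i) x * exp (aA i * x^2 + bA i * x) * std_Phi (g i * x + d i)
      + poly (QQ i) x * exp (fst (hB i) * x^2 + snd (hB i) * x)"
      by (simp add: PP_def QQ_def poly_sum sum_distrib_right sum.distrib algebra_simps) (simp add: sum_distrib_left mult_ac)
    finally show ?thesis .
  qed
  have FvH: "Fv K PP aA bA g d (hB ` K) cc x = 0" for x
  proof -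
    have "0 = (\<Sum>i\<in>K. \<Sum>\<kappa>\<in>F_set r. c i \<kappa> * skewn_deriv \<kappa> x (\<theta>0 i) (v0 i) (m0 i))"
      using H by (simp add: K_def)
    also have "\<dots> = (\<Sum>i\<in>K. poly (PP i) x * exp (aA i * x^2 + bA i * x) * std_Phi (g i * x + d i)
      + poly (QQ i) x * exp (fst (hB i) * x^2 + snd (hB i) * x))"
      by (intro sum.cong refl row) (simp add: K_def)
    also have "\<dots> = Fv K PP aA bA g d (hB ` K) cc x"
      unfolding Fv_def sum.distrib cc_def PS_img[OF Kfin] ..
    finally show ?thesis by simp
  qed
  have gnz: "g i \<noteq> 0" if "i \<in> K" for i using mnz[of i] sgpos[of i] that by (simp add: g_def K_def)
  have sep: "t = t'" if t: "t \<in> K" "t' \<in> K" and ab: "(aA t, bA t) = (aA t', bA t')"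
      and gd: "((g t)^2, g t * d t) = ((g t')^2, g t' * d t')" for t t'
  proof -
    have t0: "t < k0" "t' < k0" using t by (auto simp: K_def)
    have "(sg t)^2 = (sg t')^2" using ab by (simp add: aA_def)
    then have vv: "v0 t = v0 t'" using sgsq[OF t0(1)] sgsq[OF t0(2)] by simp
    have "(sg t)^2 > 0" using sgpos[OF t0(1)] by simp
    then have th: "\<theta>0 t = \<theta>0 t'" using ab \<open>(sg t)^2 = (sg t')^2\<close> by (simp add: bA_def)
    have "(m0 t)^2 * (sg t)^2 = (m0 t')^2 * (sg t')^2" using gd by (simp add: g_def power_mult_distrib)
    then have mm: "(m0 t)^2 = (m0 t')^2" using \<open>(sg t)^2 = (sg t')^2\<close> \<open>(sg t)^2 > 0\<close> by simp
    show ?thesis using P2_sep[OF P2nz t0 th] vv mm by simp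
  qed
  have PP0: "\<forall>i\<in>K. PP i = 0"
    by (rule GL[OF Kfin gnz sep _ FvH]) (use Kfin in auto)
  have "PS (hB ` K) cc x = 0" for x
    using FvH[of x] PP0 by (simp add: Fv_def)
  then have cc0: "\<forall>e\<in>hB ` K. cc e = 0" using Kfin by (intro PI) auto
  have hBinj: "t = t'" if t: "t \<in> K" "t' \<in> K" "hB t = hB t'" for t t'
  proof -
    have t0: "t < k0" "t' < k0" using t by (auto simp: K_def)
    have e1: "(1 + (m0 t)^2) * (sg t)^2 = (1 + (m0 t')^2) * (sg t')^2" using t(3) by (simp add: hB_def)
    have pos: "(1 + (m0 t)^2) * (sg t)^2 > 0" using sgpos[OF t0(1)] by (simp add: add_pos_nonneg)
    have m1: "1 + (m0 t')^2 \<noteq> 0" using zero_le_power2[of "m0 t'"] by linarith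
    have th: "\<theta>0 t = \<theta>0 t'" using t(3) e1 pos m1 sgpos[OF t0(2)] by (simp add: hB_def)
    have "(1 + (m0 t)^2) / v0 t = (1 + (m0 t')^2) / v0 t'" using e1 sgsq[OF t0(1)] sgsq[OF t0(2)] by simp
    then have "v0 t * (1 + (m0 t')^2) = v0 t' * (1 + (m0 t)^2)"
      using vpos[OF t0(1)] vpos[OF t0(2)] by (simp add: field_simps)
    then show ?thesis using P2_sep[OF P2nz t0 th] by simp
  qed
  have QQ0: "QQ i = 0" if "i \<in> K" for i
  proof -
    have "{j\<in>K. hB j = hB i} = {i}" using that hBinj by auto
    moreover have "cc (hB i) = 0" using cc0 that by blast
    ultimately show ?thesis by (simp add: cc_def)
  qed
  define FV where "FV = {(a, b, c). a \<le> (1::nat) \<and> c = (0::nat) \<and> a + b + c \<le> r}"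
  define FM where "FM = {(a, b, c). a \<le> (1::nat) \<and> b = (0::nat) \<and> c \<ge> 1 \<and> a + b + c \<le> r}"
  have Fsplit: "F_set r = FV \<union> FM" "FV \<inter> FM = {}" by (auto simp: F_set_def FV_def FM_def)
  have FVfin: "finite FV"
    by (rule finite_subset[of _ "{..1} \<times> {..r} \<times> {..r}"]) (auto simp: FV_def)
  have FMfin: "finite FM"
    by (rule finite_subset[of _ "{..1} \<times> {..r} \<times> {..r}"]) (auto simp: FM_def)
  show "\<forall>i<k0. \<forall>\<kappa>\<in>F_set r. c i \<kappa> = 0"
  proof (intro allI impI ballI)
    fix i \<kappa> assume i: "i < k0" and k: "\<kappa> \<in> F_set r"
    have iK: "i \<in> K" using i by (simp add: K_def)
    have Ldeg: "degree (L i) > 0" by (simp add: L_def)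
    have EApos: "EA i > 0" "EB i > 0" by (simp_all add: EA_def EB_def)
    have YAV: "YA (v0 i) (m0 i) \<kappa>' \<noteq> 0 \<and> degree (YA (v0 i) (m0 i) \<kappa>') = fst \<kappa>' + 2 * fst (snd \<kappa>')"
      if "\<kappa>' \<in> FV" for \<kappa>'
    proof -
      obtain a b cc' where kk0: "\<kappa>' = (a, b, cc')" by (cases \<kappa>')
      then have "a \<le> 1" "cc' = 0" using that by (auto simp: FV_def)
      then have kk: "\<kappa>' = (a, b, 0)" "a \<le> 1" using kk0 by auto
      have h: "poly (lead_coeff (fst ((stV (m0 i) ^^ b) (IV a (m0 i))))) (sg i) \<noteq> 0 \<and>
            degree (fst ((stV (m0 i) ^^ b) (IV a (m0 i)))) = a + 2 * b"
        using DV[OF sgpos[OF i] kk(2)] by blast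
      show ?thesis using Ys_nz[OF conjunct1[OF h]] h unfolding kk YA_def sg_def by simp
    qed
    have YAM: "YA (v0 i) (m0 i) \<kappa>' = 0" if "\<kappa>' \<in> FM" for \<kappa>'
    proof -
      obtain a b cc' where kk0: "\<kappa>' = (a, b, cc')" by (cases \<kappa>')
      then have "a \<le> 1" "b = 0" "cc' \<ge> 1" using that by (auto simp: FM_def)
      then have kk: "\<kappa>' = (a, 0, cc')" "a \<le> 1" "cc' \<ge> 1" using kk0 by auto
      show ?thesis using DM[OF sgpos[OF i] mnz[OF i] kk(2,3)] kk by (simp add: YA_def sg_def)
    qed
    have YBM: "YB (v0 i) (m0 i) \<kappa>' \<noteq> 0 \<and> degree (YB (v0 i) (m0 i) \<kappa>') = fst \<kappa>' + 2 * snd (snd \<kappa>') - 1"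
      if "\<kappa>' \<in> FM" for \<kappa>'
    proof -
      obtain a b cc' where kk0: "\<kappa>' = (a, b, cc')" by (cases \<kappa>')
      then have "a \<le> 1" "b = 0" "cc' \<ge> 1" using that by (auto simp: FM_def)
      then have kk: "\<kappa>' = (a, 0, cc')" "a \<le> 1" "cc' \<ge> 1" using kk0 by auto
      have h: "poly (lead_coeff (snd ((stM (sg i) ^^ cc') (IM a (sg i))))) (m0 i) \<noteq> 0 \<and>
            degree (snd ((stM (sg i) ^^ cc') (IM a (sg i)))) = a + 2 * cc' - 1"
        using DM[OF sgpos[OF i] mnz[OF i] kk(2,3)] by blast
      show ?thesis using Ys_nz[OF conjunct1[OF h]] h kk(3) unfolding kk YB_def sg_def by simp
    qed
    have sumA: "(\<Sum>\<kappa>\<in>F_set r. smult (c i \<kappa> * EA i) (YA (v0 i) (m0 i) \<kappa>)) = 0"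
    proof -
      have "pcompose (\<Sum>\<kappa>\<in>F_set r. smult (c i \<kappa> * EA i) (YA (v0 i) (m0 i) \<kappa>)) (L i) = PP i"
        by (simp add: PP_def pcompose_sum pcompose_smult)
      then show ?thesis using PP0 iK pcompose_eq_0[OF _ Ldeg] by simp
    qed
    have "(\<Sum>\<kappa>\<in>FV. smult (c i \<kappa> * EA i) (YA (v0 i) (m0 i) \<kappa>)) = 0"
      using sumA unfolding Fsplit(1) using FVfin FMfin Fsplit(2) by (simp add: sum.union_disjoint YAM)
    moreover have "inj_on (\<lambda>\<kappa>. degree (YA (v0 i) (m0 i) \<kappa>)) FV"
    proof (rule inj_onI)
      fix k1 k2 assume k: "k1 \<in> FV" "k2 \<in> FV" "degree (YA (v0 i) (m0 i) k1) = degree (YA (v0 i) (m0 i) k2)"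
      obtain a1 b1 c1 where k1: "k1 = (a1, b1, c1)" by (cases k1)
      obtain a2 b2 c2 where k2: "k2 = (a2, b2, c2)" by (cases k2)
      have "a1 \<le> 1" "c1 = 0" "a2 \<le> 1" "c2 = 0" using k(1,2) by (auto simp: FV_def k1 k2)
      moreover have "a1 + 2 * b1 = a2 + 2 * b2"
      proof -
        have "degree (YA (v0 i) (m0 i) k1) = a1 + 2 * b1" using conjunct2[OF YAV[OF k(1)]] unfolding k1 by simp
        moreover have "degree (YA (v0 i) (m0 i) k2) = a2 + 2 * b2" using conjunct2[OF YAV[OF k(2)]] unfolding k2 by simp
        ultimately show ?thesis using k(3) by linarith
      qed
      ultimately show "k1 = k2" using par1[of a1 a2 b1 b2] by (simp add: k1 k2)
    qed
    ultimately have cV: "\<forall>\<kappa>\<in>FV. c i \<kappa> * EA i = 0"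
      using DEGIND[OF FVfin, of "YA (v0 i) (m0 i)" "\<lambda>\<kappa>. c i \<kappa> * EA i"] YAV by blast
    then have cV': "\<forall>\<kappa>\<in>FV. c i \<kappa> = 0" using EApos by simp
    have sumB: "(\<Sum>\<kappa>\<in>F_set r. smult (c i \<kappa> * EB i) (YB (v0 i) (m0 i) \<kappa>)) = 0"
    proof -
      have "pcompose (\<Sum>\<kappa>\<in>F_set r. smult (c i \<kappa> * EB i) (YB (v0 i) (m0 i) \<kappa>)) (L i) = QQ i"
        by (simp add: QQ_def pcompose_sum pcompose_smult)
      then show ?thesis using QQ0[OF iK] pcompose_eq_0[OF _ Ldeg] by simp
    qed
    have "(\<Sum>\<kappa>\<in>FM. smult (c i \<kappa> * EB i) (YB (v0 i) (m0 i) \<kappa>)) = 0"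
      using sumB unfolding Fsplit(1) using FVfin FMfin Fsplit(2) cV' by (simp add: sum.union_disjoint)
    moreover have "inj_on (\<lambda>\<kappa>. degree (YB (v0 i) (m0 i) \<kappa>)) FM"
    proof (rule inj_onI)
      fix k1 k2 assume k: "k1 \<in> FM" "k2 \<in> FM" "degree (YB (v0 i) (m0 i) k1) = degree (YB (v0 i) (m0 i) k2)"
      obtain a1 b1 c1 where k1: "k1 = (a1, b1, c1)" by (cases k1)
      obtain a2 b2 c2 where k2: "k2 = (a2, b2, c2)" by (cases k2)
      have "a1 \<le> 1" "b1 = 0" "c1 \<ge> 1" "a2 \<le> 1" "b2 = 0" "c2 \<ge> 1" using k(1,2) by (auto simp: FM_def k1 k2)
      moreover have "a1 + 2 * c1 - 1 = a2 + 2 * c2 - 1"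
      proof -
        have "degree (YB (v0 i) (m0 i) k1) = a1 + 2 * c1 - 1" using conjunct2[OF YBM[OF k(1)]] unfolding k1 by simp
        moreover have "degree (YB (v0 i) (m0 i) k2) = a2 + 2 * c2 - 1" using conjunct2[OF YBM[OF k(2)]] unfolding k2 by simp
        ultimately show ?thesis using k(3) by linarith
      qed
      ultimately show "k1 = k2" using par2[of a1 a2 c1 c2] by (simp add: k1 k2)
    qed
    ultimately have cM: "\<forall>\<kappa>\<in>FM. c i \<kappa> * EB i = 0"
      using DEGIND[OF FMfin, of "YB (v0 i) (m0 i)" "\<lambda>\<kappa>. c i \<kappa> * EB i"] YBM by blast
    then have cM': "\<forall>\<kappa>\<in>FM. c i \<kappa> = 0" using EApos by simp
    show "c i \<kappa> = 0" using k cV' cM' Fsplit(1) by auto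
  qed
qed

end
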